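(* Let $\Lambda=kQ/I(n;n',n'';V)$ with $m=\min(n',n'')$, $d=\dim_kV/(\beta^m)$, and suppose $V$ is an ideal of $k[\beta]$, i.e. $V=(\beta^{m-d})$, and that $\delta=\gcd(n,n',n'')$ divides $d$. Then $$\dim_k\mathrm{HH}^1(\Lambda)=(n-1)+(m-1)+c>0.$$ In particular, if $m=1$ then $\dim_k\mathrm{HH}^1(\Lambda)=n-1$.
   Context: $k$ is a field; $Q$ is the quiver with vertices $1,2,3$ and arrows $\alpha\colon 2\to1$, $\beta\colon 2\to 2$, $\gamma\colon 3\to 2$; $kQ$ is generated by pairwise orthogonal idempotents $e_1,e_2,e_3$ (sum $1$) and $\alpha,\beta,\gamma$ with $e_1\alpha=\alpha=\alpha e_2$, $e_2\beta=\beta=\beta e_2$, $e_3\gamma=\gamma=\gamma e_2$, $\gamma\alpha=\beta\alpha=\gamma\beta=0$; for $v=\sum_iv_i\beta^i\in k[\beta]$, $\alpha v\gamma=\sum_iv_i\alpha\beta^i\gamma$. For integers $n\ge 2$, $1\le n',n''\le n$, $m=\min(n',n'')$ and a $k$-subspace $V\subseteq k[\beta]$ containing $(\beta^m)$, $I(n;n',n'';V)$ is the two-sided ideal of $kQ$ generated by $\alpha\beta^{n'}$, $\beta^n$, $\beta^{n''}\gamma$ and all $\alpha v\gamma$, $v\in V$. $c=1$ if $\delta=0$ in $k$ and $c=0$ otherwise. $\mathrm{HH}^1(\Lambda)=\mathrm{Der}_k(\Lambda,\Lambda)/\mathrm{Inn}(\Lambda)$. *)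

theory Defs
  imports Main "HOL-Computational_Algebra.Polynomial"
begin

datatype arrow = Al | Be | Ga

fun asrc :: "arrow \<Rightarrow> nat" where
  "asrc Al = 2" | "asrc Be = 2" | "asrc Ga = 3"

fun atgt :: "arrow \<Rightarrow> nat" where
  "atgt Al = 1" | "atgt Be = 2" | "atgt Ga = 2"

text \<open>Paths: trivial paths e_v, or words a_1 a_2 ... a_r read as products in kQ,
  i.e. composition right-to-left (so e_1 alpha = alpha = alpha e_2): the word is a
  path iff the source of a_i equals the target of a_(i+1).\<close>

datatype path = Triv nat | Pth "arrow list"

fun ptgt :: "path \<Rightarrow> nat" where
  "ptgt (Triv v) = v" | "ptgt (Pth xs) = atgt (hd xs)"

fun psrc :: "path \<Rightarrow> nat" where
  "psrc (Triv v) = v" | "psrc (Pth xs) = asrc (last xs)"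

definition valid_path :: "path \<Rightarrow> bool" where
  "valid_path p = (case p of Triv v \<Rightarrow> v \<in> {1,2,3}
     | Pth xs \<Rightarrow> xs \<noteq> [] \<and> (\<forall>i. Suc i < length xs \<longrightarrow> asrc (xs ! i) = atgt (xs ! Suc i)))"

fun pcat :: "path \<Rightarrow> path \<Rightarrow> path" where
  "pcat (Triv v) q = q"
| "pcat p (Triv v) = p"
| "pcat (Pth xs) (Pth ys) = Pth (xs @ ys)"

text \<open>Product of two paths in kQ (None means the product is 0).\<close>
definition pmul :: "path \<Rightarrow> path \<Rightarrow> path option" where
  "pmul p q = (if psrc p = ptgt q then Some (pcat p q) else None)"

definition kQ :: "(path \<Rightarrow> 'k::field) set" where
  "kQ = {f. finite {p. f p \<noteq> 0} \<and> (\<forall>p. f p \<noteq> 0 \<longrightarrow> valid_path p)}"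

definition kzero :: "path \<Rightarrow> 'k::field" where "kzero = (\<lambda>_. 0)"
definition kadd :: "(path \<Rightarrow> 'k::field) \<Rightarrow> (path \<Rightarrow> 'k) \<Rightarrow> path \<Rightarrow> 'k" where
  "kadd f g = (\<lambda>p. f p + g p)"
definition ksmul :: "'k::field \<Rightarrow> (path \<Rightarrow> 'k) \<Rightarrow> path \<Rightarrow> 'k" where
  "ksmul c f = (\<lambda>p. c * f p)"
definition kmul :: "(path \<Rightarrow> 'k::field) \<Rightarrow> (path \<Rightarrow> 'k) \<Rightarrow> path \<Rightarrow> 'k" where
  "kmul f g = (\<lambda>r. \<Sum>(p, q) \<in> {(p, q). f p \<noteq> 0 \<and> g q \<noteq> 0 \<and> pmul p q = Some r}. f p * g q)"

definition bp :: "path \<Rightarrow> path \<Rightarrow> 'k::field" where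
  "bp p = (\<lambda>q. if q = p then 1 else 0)"

inductive_set gen_ideal :: "(path \<Rightarrow> 'k::field) set \<Rightarrow> (path \<Rightarrow> 'k) set" for G where
  gen: "g \<in> G \<Longrightarrow> g \<in> gen_ideal G"
| zero: "kzero \<in> gen_ideal G"
| add: "x \<in> gen_ideal G \<Longrightarrow> y \<in> gen_ideal G \<Longrightarrow> kadd x y \<in> gen_ideal G"
| smul: "x \<in> gen_ideal G \<Longrightarrow> ksmul c x \<in> gen_ideal G"
| lmul: "x \<in> gen_ideal G \<Longrightarrow> a \<in> kQ \<Longrightarrow> kmul a x \<in> gen_ideal G"
| rmul: "x \<in> gen_ideal G \<Longrightarrow> a \<in> kQ \<Longrightarrow> kmul x a \<in> gen_ideal G"

text \<open>alpha v gamma for v in k[beta] (polynomials in beta).\<close>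
definition alpha_v_gamma :: "'k::field poly \<Rightarrow> path \<Rightarrow> 'k" where
  "alpha_v_gamma v = (\<lambda>p. \<Sum>i\<le>degree v. coeff v i * bp (Pth (Al # replicate i Be @ [Ga])) p)"

definition Iq :: "nat \<Rightarrow> nat \<Rightarrow> nat \<Rightarrow> 'k::field poly set \<Rightarrow> (path \<Rightarrow> 'k) set" where
  "Iq n n' n'' V = gen_ideal
     ({bp (Pth (Al # replicate n' Be)), bp (Pth (replicate n Be)),
       bp (Pth (replicate n'' Be @ [Ga]))} \<union> alpha_v_gamma ` V)"

definition coset :: "(path \<Rightarrow> 'k::field) set \<Rightarrow> (path \<Rightarrow> 'k) \<Rightarrow> (path \<Rightarrow> 'k) set" where
  "coset I x = {y \<in> kQ. (\<lambda>p. y p - x p) \<in> I}"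

definition Lam :: "(path \<Rightarrow> 'k::field) set \<Rightarrow> (path \<Rightarrow> 'k) set set" where
  "Lam I = coset I ` kQ"

definition rep :: "(path \<Rightarrow> 'k::field) set \<Rightarrow> path \<Rightarrow> 'k" where
  "rep A = (SOME x. x \<in> A)"

definition qzero :: "(path \<Rightarrow> 'k::field) set \<Rightarrow> (path \<Rightarrow> 'k) set" where
  "qzero I = coset I kzero"
definition qadd :: "(path \<Rightarrow> 'k::field) set \<Rightarrow> (path \<Rightarrow> 'k) set \<Rightarrow> (path \<Rightarrow> 'k) set \<Rightarrow> (path \<Rightarrow> 'k) set" where
  "qadd I A B = coset I (kadd (rep A) (rep B))"
definition qsmul :: "(path \<Rightarrow> 'k::field) set \<Rightarrow> 'k \<Rightarrow> (path \<Rightarrow> 'k) set \<Rightarrow> (path \<Rightarrow> 'k) set" where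
  "qsmul I c A = coset I (ksmul c (rep A))"
definition qmul :: "(path \<Rightarrow> 'k::field) set \<Rightarrow> (path \<Rightarrow> 'k) set \<Rightarrow> (path \<Rightarrow> 'k) set \<Rightarrow> (path \<Rightarrow> 'k) set" where
  "qmul I A B = coset I (kmul (rep A) (rep B))"

section \<open>Derivations, inner derivations, and dim HH^1 = dim Der/Inn\<close>

definition is_derivation :: "(path \<Rightarrow> 'k::field) set \<Rightarrow> ((path \<Rightarrow> 'k) set \<Rightarrow> (path \<Rightarrow> 'k) set) \<Rightarrow> bool" where
  "is_derivation I D =
    ((\<forall>A\<in>Lam I. D A \<in> Lam I)
     \<and> (\<forall>A\<in>Lam I. \<forall>B\<in>Lam I. D (qadd I A B) = qadd I (D A) (D B))
     \<and> (\<forall>c. \<forall>A\<in>Lam I. D (qsmul I c A) = qsmul I c (D A))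
     \<and> (\<forall>A\<in>Lam I. \<forall>B\<in>Lam I. D (qmul I A B) = qadd I (qmul I (D A) B) (qmul I A (D B))))"

definition inner_der :: "(path \<Rightarrow> 'k::field) set \<Rightarrow> (path \<Rightarrow> 'k) set \<Rightarrow> (path \<Rightarrow> 'k) set \<Rightarrow> (path \<Rightarrow> 'k) set" where
  "inner_der I X = (\<lambda>A. qadd I (qmul I X A) (qsmul I (-1) (qmul I A X)))"

text \<open>Maps are identified when they agree on Lambda.\<close>
definition is_inner :: "(path \<Rightarrow> 'k::field) set \<Rightarrow> ((path \<Rightarrow> 'k) set \<Rightarrow> (path \<Rightarrow> 'k) set) \<Rightarrow> bool" where
  "is_inner I D = (\<exists>X\<in>Lam I. \<forall>A\<in>Lam I. D A = inner_der I X A)"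

fun qcomb :: "(path \<Rightarrow> 'k::field) set \<Rightarrow> ('k \<times> ((path \<Rightarrow> 'k) set \<Rightarrow> (path \<Rightarrow> 'k) set)) list
      \<Rightarrow> (path \<Rightarrow> 'k) set \<Rightarrow> (path \<Rightarrow> 'k) set" where
  "qcomb I [] A = qzero I"
| "qcomb I ((c, D) # cDs) A = qadd I (qsmul I c (D A)) (qcomb I cDs A)"

definition indep_mod_inner :: "(path \<Rightarrow> 'k::field) set \<Rightarrow> ((path \<Rightarrow> 'k) set \<Rightarrow> (path \<Rightarrow> 'k) set) list \<Rightarrow> bool" where
  "indep_mod_inner I Ds =
    ((\<forall>D\<in>set Ds. is_derivation I D)
     \<and> (\<forall>cs. length cs = length Ds \<longrightarrow> is_inner I (qcomb I (zip cs Ds)) \<longrightarrow> (\<forall>c\<in>set cs. c = 0)))"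

definition HH1_finite_dim :: "(path \<Rightarrow> 'k::field) set \<Rightarrow> bool" where
  "HH1_finite_dim I = bdd_above {length Ds | Ds. indep_mod_inner I Ds}"

definition HH1_dim :: "(path \<Rightarrow> 'k::field) set \<Rightarrow> nat" where
  "HH1_dim I = Sup {length Ds | Ds. indep_mod_inner I Ds}"

end

theory Submission
  imports Defs "HOL-Library.Function_Algebras"
begin



definition P :: "bool \<Rightarrow> nat \<Rightarrow> bool \<Rightarrow> path" where
  "P a k g = (if \<not>a \<and> k = 0 \<and> \<not>g then Triv 2 else Pth ((if a then [Al] else []) @ replicate k Be @ (if g then [Ga] else [])))"

fun pa :: "path \<Rightarrow> bool" where "pa (Triv v) = False" | "pa (Pth xs) = (Al \<in> set xs)"
fun pg :: "path \<Rightarrow> bool" where "pg (Triv v) = False" | "pg (Pth xs) = (Ga \<in> set xs)"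
fun pk :: "path \<Rightarrow> nat" where "pk (Triv v) = 0" | "pk (Pth xs) = count_list xs Be"

lemma count_rep: "count_list (replicate k x) x = k"
  by (induction k) auto

lemma pa_P[simp]: "pa (P a k g) = a" by (auto simp: P_def)
lemma pg_P[simp]: "pg (P a k g) = g" by (auto simp: P_def)
lemma pk_P[simp]: "pk (P a k g) = k" by (auto simp: P_def count_rep)

lemma P_inj[simp]: "P a k g = P a' k' g' \<longleftrightarrow> a = a' \<and> k = k' \<and> g = g'"
proof
  assume h: "P a k g = P a' k' g'"
  have "pa (P a k g) = pa (P a' k' g')" "pk (P a k g) = pk (P a' k' g')" "pg (P a k g) = pg (P a' k' g')"
    using h by simp_all
  then show "a = a' \<and> k = k' \<and> g = g'" by simp
qed simp

lemma P_neq[simp]: "P a k g \<noteq> Triv 1" "P a k g \<noteq> Triv 3" "Triv 1 \<noteq> P a k g" "Triv 3 \<noteq> P a k g"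
  "P a k g \<noteq> Triv (Suc 0)" "Triv (Suc 0) \<noteq> P a k g"
  "P a k g \<noteq> Triv (Suc 0)" "Triv (Suc 0) \<noteq> P a k g"
  by (auto simp: P_def)
lemma psrc_P[simp]: "psrc (P a k g) = (if g then 3 else 2)"
  by (cases k) (auto simp: P_def)
lemma ptgt_P[simp]: "ptgt (P a k g) = (if a then 1 else 2)"
  by (cases k) (auto simp: P_def)

lemma pcat_P: "\<not>g \<Longrightarrow> \<not>a' \<Longrightarrow> pcat (P a k g) (P a' k' g') = P a (k+k') g'"
  by (auto simp: P_def replicate_add)

lemma pmul_PP[simp]: "pmul (P a k g) (P a' k' g') = (if \<not>g \<and> \<not>a' then Some (P a (k+k') g') else None)"
  by (auto simp: pmul_def pcat_P)

lemma pmul_T1P[simp]: "pmul (Triv 1) (P a k g) = (if a then Some (P a k g) else None)"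
  "pmul (Triv (Suc 0)) (P a k g) = (if a then Some (P a k g) else None)"
  by (auto simp: pmul_def)
lemma pmul_PT1[simp]: "pmul (P a k g) (Triv 1) = None" "pmul (P a k g) (Triv (Suc 0)) = None"
  by (auto simp: pmul_def)
lemma pmul_T3P[simp]: "pmul (Triv 3) (P a k g) = None"
  by (auto simp: pmul_def)
lemma pmul_PT3[simp]: "pmul (P a k g) (Triv 3) = (if g then Some (P a k g) else None)"
  by (auto simp: pmul_def P_def)
lemma pmul_TT[simp]: "pmul (Triv i) (Triv j) = (if i = j then Some (Triv i) else None)"
  by (auto simp: pmul_def)

definition chain :: "arrow list \<Rightarrow> bool" where
  "chain xs = (\<forall>i. Suc i < length xs \<longrightarrow> asrc (xs ! i) = atgt (xs ! Suc i))"

lemma chain_Nil[simp]: "chain []" by (simp add: chain_def)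
lemma chain_Cons: "chain (x # xs) \<longleftrightarrow> chain xs \<and> (xs \<noteq> [] \<longrightarrow> asrc x = atgt (hd xs))"
  unfolding chain_def
  apply (cases xs)
   apply simp
  apply (auto simp: nth_Cons split: nat.splits)
  done

lemma chain_shape: "chain xs \<Longrightarrow> \<exists>a k g. xs = (if a then [Al] else []) @ replicate k Be @ (if g then [Ga] else [])"
proof (induction xs)
  case Nil
  have "[] = (if False then [Al] else []) @ replicate 0 Be @ (if False then [Ga] else [])" by simp
  then show ?case by blast
next
  case (Cons x xs)
  from Cons.prems have c: "chain xs" and h: "xs \<noteq> [] \<longrightarrow> asrc x = atgt (hd xs)" by (auto simp: chain_Cons)
  from Cons.IH[OF c] obtain a k g where xs: "xs = (if a then [Al] else []) @ replicate k Be @ (if g then [Ga] else [])" by blast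
  show ?case
  proof (cases "xs = []")
    case True
    then show ?thesis
      by (cases x) (rule exI[of _ True], rule exI[of _ 0], rule exI[of _ False], simp,
                    rule exI[of _ False], rule exI[of _ 1], rule exI[of _ False], simp,
                    rule exI[of _ False], rule exI[of _ 0], rule exI[of _ True], simp)
  next
    case False
    with h have hh: "asrc x = atgt (hd xs)" by simp
    have na: "\<not> a" using hh xs by (cases x; cases a; auto)
    show ?thesis
    proof (cases x)
      case Al
      then show ?thesis using na xs by (intro exI[of _ True] exI[of _ k] exI[of _ g]) simp
    next
      case Be
      then show ?thesis using na xs by (intro exI[of _ False] exI[of _ "Suc k"] exI[of _ g]) simp
    next
      case Ga
      then show ?thesis using hh xs False by (cases a; cases k; cases g; auto)
    qed
  qed
qed

lemma chain_rep: "chain (replicate k Be @ ys) \<longleftrightarrow> chain ys \<and> (k > 0 \<and> ys \<noteq> [] \<longrightarrow> hd ys \<noteq> Al)"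
  apply (induction k)
   apply (simp)
  apply (case_tac k)
   apply (auto simp: chain_Cons)
     apply (case_tac "hd ys"; simp)+
  done

lemma chain_Plist: "chain ((if a then [Al] else []) @ replicate k Be @ (if g then [Ga] else []))"
proof -
  have c1: "chain (replicate k Be @ (if g then [Ga] else []))"
    by (subst chain_rep) (auto simp: chain_Cons)
  show ?thesis
  proof (cases a)
    case True
    then show ?thesis using c1 by (cases k; cases g; simp add: chain_Cons)
  qed (use c1 in simp)
qed

lemma valid_P[simp]: "valid_path (P a k g)"
  using chain_Plist[of a k g] unfolding P_def valid_path_def chain_def by auto

lemma valid_iff: "valid_path p \<longleftrightarrow> p = Triv 1 \<or> p = Triv 3 \<or> (\<exists>a k g. p = P a k g)"
proof
  assume v: "valid_path p"
  show "p = Triv 1 \<or> p = Triv 3 \<or> (\<exists>a k g. p = P a k g)"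
  proof (cases p)
    case (Triv v')
    then show ?thesis using v by (auto simp: valid_path_def P_def intro: exI[of _ False] exI[of _ 0])
  next
    case (Pth xs)
    with v have ne: "xs \<noteq> []" and c: "chain xs" by (auto simp: valid_path_def chain_def)
    from chain_shape[OF c] obtain a k g where xs: "xs = (if a then [Al] else []) @ replicate k Be @ (if g then [Ga] else [])" by blast
    have "p = P a k g" using Pth xs ne by (auto simp: P_def)
    then show ?thesis by blast
  qed
next
  assume "p = Triv 1 \<or> p = Triv 3 \<or> (\<exists>a k g. p = P a k g)"
  then show "valid_path p" by (elim disjE exE) (simp add: valid_path_def, simp add: valid_path_def, simp)
qed




lemma Pth_eqs:
  "Pth (Al # replicate k Be) = P True k False"
  "Pth (replicate k Be @ [Ga]) = P False k True"
  "Pth (Al # replicate k Be @ [Ga]) = P True k True"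
  "k > 0 \<Longrightarrow> Pth (replicate k Be) = P False k False"
  by (auto simp: P_def)

lemma valid_T[simp]: "valid_path (Triv 1)" "valid_path (Triv (Suc 0))" "valid_path (Triv 3)"
  by (simp_all add: valid_path_def)

lemma pmul_valid0: "valid_path p \<Longrightarrow> valid_path q \<Longrightarrow> (case pmul p q of None \<Rightarrow> True | Some r \<Rightarrow> valid_path r)"
  unfolding valid_iff[of p] valid_iff[of q] by (elim disjE exE) auto

lemma pmul_valid: "valid_path p \<Longrightarrow> valid_path q \<Longrightarrow> pmul p q = Some r \<Longrightarrow> valid_path r"
  using pmul_valid0[of p q] by simp

lemma pmul_Some_pcat: "pmul p q = Some r \<Longrightarrow> r = pcat p q"
  by (auto simp: pmul_def split: if_splits)

lemma bp_kQ: "valid_path p \<Longrightarrow> bp p \<in> kQ"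
  by (auto simp: kQ_def bp_def)

lemma kzero_kQ[simp]: "kzero \<in> kQ" "(\<lambda>_. 0) \<in> kQ" by (simp_all add: kQ_def kzero_def)

lemma kadd_kQ: "f \<in> kQ \<Longrightarrow> g \<in> kQ \<Longrightarrow> kadd f g \<in> kQ"
proof -
  assume f: "f \<in> kQ" and g: "g \<in> kQ"
  have "{p. f p + g p \<noteq> 0} \<subseteq> {p. f p \<noteq> 0} \<union> {p. g p \<noteq> 0}" by auto
  then show ?thesis using f g unfolding kQ_def kadd_def by (auto intro: finite_subset)
qed

lemma ksmul_kQ: "f \<in> kQ \<Longrightarrow> ksmul c f \<in> kQ"
proof -
  assume f: "f \<in> kQ"
  have "{p. c * f p \<noteq> 0} \<subseteq> {p. f p \<noteq> 0}" by auto
  then show ?thesis using f unfolding kQ_def ksmul_def by (auto intro: finite_subset)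
qed

lemma kmul_nonzero: "kmul f g r \<noteq> 0 \<Longrightarrow> \<exists>p q. f p \<noteq> 0 \<and> g q \<noteq> 0 \<and> pmul p q = Some r"
proof (rule ccontr)
  assume "kmul f g r \<noteq> 0" "\<not> (\<exists>p q. f p \<noteq> 0 \<and> g q \<noteq> 0 \<and> pmul p q = Some r)"
  then have "{(p, q). f p \<noteq> 0 \<and> g q \<noteq> 0 \<and> pmul p q = Some r} = {}" by auto
  with \<open>kmul f g r \<noteq> 0\<close> show False by (simp add: kmul_def)
qed

lemma kmul_kQ: "f \<in> kQ \<Longrightarrow> g \<in> kQ \<Longrightarrow> kmul f g \<in> kQ"
proof -
  assume f: "f \<in> kQ" and g: "g \<in> kQ"
  have "{r. kmul f g r \<noteq> 0} \<subseteq> (\<lambda>(p, q). pcat p q) ` ({p. f p \<noteq> 0} \<times> {q. g q \<noteq> 0})"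
    by (auto dest!: kmul_nonzero pmul_Some_pcat)
  moreover have "finite ((\<lambda>(p, q). pcat p q) ` ({p. f p \<noteq> 0} \<times> {q. g q \<noteq> 0}))"
    using f g by (auto simp: kQ_def)
  ultimately have fin: "finite {r. kmul f g r \<noteq> 0}" by (rule finite_subset)
  have "\<forall>r. kmul f g r \<noteq> 0 \<longrightarrow> valid_path r"
    using f g by (auto simp: kQ_def dest!: kmul_nonzero intro: pmul_valid)
  with fin show ?thesis by (simp add: kQ_def)
qed

lemma kmul_bp_pt: "kmul (bp p) (bp q) r = (if pmul p q = Some r then 1 else (0::'a::field))"
proof (cases "pmul p q = Some r")
  case True
  have S: "{(p', q'). bp p p' \<noteq> (0::'a) \<and> bp q q' \<noteq> (0::'a) \<and> pmul p' q' = Some r} = {(p, q)}"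
    using True by (auto simp: bp_def)
  show ?thesis unfolding kmul_def S using True by (simp add: bp_def)
next
  case False
  have S: "{(p', q'). bp p p' \<noteq> (0::'a) \<and> bp q q' \<noteq> (0::'a) \<and> pmul p' q' = Some r} = {}"
    using False by (auto simp: bp_def)
  show ?thesis unfolding kmul_def S using False by simp
qed

lemma kmul_bp: "kmul (bp p) (bp q) = (case pmul p q of None \<Rightarrow> kzero | Some r \<Rightarrow> bp r)"
  by (rule ext) (unfold kmul_bp_pt, auto simp: bp_def kzero_def split: option.splits)

lemma kmul_bp_Some: "pmul p q = Some r \<Longrightarrow> kmul (bp p) (bp q) = bp r"
  by (simp add: kmul_bp)

locale HH =
  fixes n n' n'' d :: nat
  assumes n2: "2 \<le> n" and n'1: "1 \<le> n'" and n'n: "n' \<le> n" and n''1: "1 \<le> n''" and n''n: "n'' \<le> n"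
    and dm: "d \<le> min n' n''" and gd: "gcd n (gcd n' n'') dvd d"
begin

definition "m = min n' n''"
definition "t = m - d"

definition goodP :: "bool \<Rightarrow> nat \<Rightarrow> bool \<Rightarrow> bool" where
  "goodP a k g \<longleftrightarrow> k < n \<and> (a \<longrightarrow> k < n') \<and> (g \<longrightarrow> k < n'') \<and> (a \<and> g \<longrightarrow> k < t)"

definition G :: "path set" where "G = {Triv 1, Triv 3} \<union> {P a k g | a k g. goodP a k g}"

lemma P_in_G[simp]: "P a k g \<in> G \<longleftrightarrow> goodP a k g"
  by (auto simp: G_def)
lemma T_in_G[simp]: "Triv 1 \<in> G" "Triv 3 \<in> G" "Triv (Suc 0) \<in> G"
  by (auto simp: G_def)

lemma G_cases[consumes 1, case_names T1 T3 PP]: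
  assumes "p \<in> G" "p = Triv 1 \<Longrightarrow> Q" "p = Triv 3 \<Longrightarrow> Q" "\<And>a k g. p = P a k g \<Longrightarrow> goodP a k g \<Longrightarrow> Q"
  shows Q
  using assms by (auto simp: G_def)

lemma finite_G[simp]: "finite G"
proof -
  have "G \<subseteq> {Triv 1, Triv 3} \<union> (\<lambda>(a, k, g). P a k g) ` (UNIV \<times> {..<n} \<times> UNIV)"
    by (auto simp: G_def goodP_def image_iff)
  moreover have "finite ({Triv 1, Triv 3} \<union> (\<lambda>(a, k, g). P a k g) ` (UNIV \<times> {..<n} \<times> (UNIV::bool set)))"
    by simp
  ultimately show ?thesis by (rule finite_subset)
qed

lemma G_valid: "p \<in> G \<Longrightarrow> valid_path p"
  by (auto simp: G_def valid_iff)

lemma sub_good0: "valid_path p \<Longrightarrow> valid_path q \<Longrightarrow> (case pmul p q of None \<Rightarrow> True | Some r \<Rightarrow> r \<in> G \<longrightarrow> p \<in> G \<and> q \<in> G)"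
  unfolding valid_iff[of p] valid_iff[of q] by (elim disjE exE) (auto simp: goodP_def)

lemma sub_good: "valid_path p \<Longrightarrow> valid_path q \<Longrightarrow> pmul p q = Some r \<Longrightarrow> r \<in> G \<Longrightarrow> p \<in> G \<and> q \<in> G"
  using sub_good0[of p q] by simp

definition Vt :: "'k::field poly set" where "Vt = {v. [:0, 1:] ^ t dvd v}"

definition gens :: "(path \<Rightarrow> 'k::field) set" where
  "gens = {bp (P True n' False), bp (P False n False), bp (P False n'' True)} \<union> alpha_v_gamma ` Vt"

definition II :: "(path \<Rightarrow> 'k::field) set" where "II = Iq n n' n'' Vt"

lemma II_gen: "II = gen_ideal gens"
  using n2 by (simp add: II_def Iq_def gens_def Pth_eqs)

lemma coeff_Vt: "v \<in> Vt \<Longrightarrow> i < t \<Longrightarrow> coeff v i = 0"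
proof -
  assume "v \<in> Vt" "i < t"
  then obtain q where "v = monom 1 t * q" by (auto simp: Vt_def monom_altdef)
  with \<open>i < t\<close> show ?thesis by (simp add: coeff_monom_mult)
qed

lemma avg_P: "alpha_v_gamma v (P True i True) = coeff v i"
proof -
  have "alpha_v_gamma v (P True i True) = (\<Sum>j\<le>degree v. if j = i then coeff v j else 0)"
    unfolding alpha_v_gamma_def Pth_eqs by (intro sum.cong) (auto simp: bp_def)
  also have "\<dots> = coeff v i" by (auto simp: coeff_eq_0)
  finally show ?thesis .
qed

lemma avg_0: "(\<forall>i. p \<noteq> P True i True) \<Longrightarrow> alpha_v_gamma v p = 0"
  unfolding alpha_v_gamma_def Pth_eqs by (intro sum.neutral) (auto simp: bp_def)

lemma avg_kQ: "alpha_v_gamma v \<in> kQ"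
proof -
  have "{p. alpha_v_gamma v p \<noteq> 0} \<subseteq> (\<lambda>i. P True i True) ` {..degree v}"
  proof
    fix p assume "p \<in> {p. alpha_v_gamma v p \<noteq> 0}"
    then have h: "alpha_v_gamma v p \<noteq> 0" by simp
    then obtain i where "p = P True i True" using avg_0 by blast
    with h have "i \<le> degree v" by (auto simp: avg_P intro: le_degree)
    then show "p \<in> (\<lambda>i. P True i True) ` {..degree v}" using \<open>p = _\<close> by auto
  qed
  then have "finite {p. alpha_v_gamma v p \<noteq> 0}" by (rule finite_subset) simp
  moreover have "\<forall>p. alpha_v_gamma v p \<noteq> 0 \<longrightarrow> valid_path p"
  proof (intro allI impI)
    fix p assume "alpha_v_gamma v p \<noteq> 0"
    then obtain i where "p = P True i True" using avg_0 by blast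
    then show "valid_path p" by simp
  qed
  ultimately show ?thesis by (simp add: kQ_def)
qed

definition badsupp :: "(path \<Rightarrow> 'k::field) \<Rightarrow> bool" where
  "badsupp f \<longleftrightarrow> (\<forall>p. f p \<noteq> 0 \<longrightarrow> p \<notin> G)"

lemma gens_ok: "g \<in> gens \<Longrightarrow> g \<in> kQ \<and> badsupp g"
proof -
  assume "g \<in> gens"
  then consider "g = bp (P True n' False)" | "g = bp (P False n False)" | "g = bp (P False n'' True)"
    | v where "v \<in> Vt" "g = alpha_v_gamma v"
    by (auto simp: gens_def)
  then show ?thesis
  proof cases
    case 4
    have "badsupp g"
      unfolding badsupp_def
    proof (intro allI impI)
      fix p assume h: "g p \<noteq> 0"
      then obtain i where p: "p = P True i True" using avg_0 4 by blast
      with h 4 have "coeff v i \<noteq> 0" by (simp add: avg_P)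
      with coeff_Vt[OF 4(1)] have "\<not> i < t" by blast
      then show "p \<notin> G" using p by (simp add: goodP_def)
    qed
    then show ?thesis using 4 avg_kQ by simp
  qed (simp_all add: bp_kQ, auto simp: badsupp_def bp_def goodP_def)
qed

lemma ideal_sub: "x \<in> gen_ideal gens \<Longrightarrow> x \<in> kQ \<and> badsupp x"
proof (induction rule: gen_ideal.induct)
  case (gen g)
  then show ?case by (rule gens_ok)
next
  case zero
  then show ?case by (simp add: badsupp_def kzero_def)
next
  case (add x y)
  have "kadd x y \<in> kQ" using add.IH by (simp add: kadd_kQ)
  moreover have "badsupp (kadd x y)" using add.IH unfolding badsupp_def kadd_def
    by (metis add.left_neutral)
  ultimately show ?case by simp
next
  case (smul x c)
  have "ksmul c x \<in> kQ" using smul.IH by (simp add: ksmul_kQ)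
  moreover have "badsupp (ksmul c x)" using smul.IH unfolding badsupp_def ksmul_def
    by (metis mult_zero_right)
  ultimately show ?case by simp
next
  case (lmul x a)
  have "badsupp (kmul a x)"
    unfolding badsupp_def
  proof (intro allI impI)
    fix r assume "kmul a x r \<noteq> 0"
    then obtain p q where "a p \<noteq> 0" "x q \<noteq> 0" "pmul p q = Some r" by (blast dest: kmul_nonzero)
    moreover have "valid_path p" "valid_path q" using lmul \<open>a p \<noteq> 0\<close> \<open>x q \<noteq> 0\<close> by (auto simp: kQ_def)
    ultimately show "r \<notin> G" using lmul.IH sub_good by (auto simp: badsupp_def)
  qed
  then show ?case using lmul by (simp add: kmul_kQ)
next
  case (rmul x a)
  have "badsupp (kmul x a)"
    unfolding badsupp_def
  proof (intro allI impI)
    fix r assume "kmul x a r \<noteq> 0"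
    then obtain p q where "x p \<noteq> 0" "a q \<noteq> 0" "pmul p q = Some r" by (blast dest: kmul_nonzero)
    moreover have "valid_path p" "valid_path q" using rmul \<open>a q \<noteq> 0\<close> \<open>x p \<noteq> 0\<close> by (auto simp: kQ_def)
    ultimately show "r \<notin> G" using rmul.IH sub_good by (auto simp: badsupp_def)
  qed
  then show ?case using rmul by (simp add: kmul_kQ)
qed

lemma gI: "x \<in> gens \<Longrightarrow> x \<in> gen_ideal gens"
  by (rule gen_ideal.gen)

lemma bp_bad_in: "valid_path p \<Longrightarrow> p \<notin> G \<Longrightarrow> (bp p :: path \<Rightarrow> 'k::field) \<in> gen_ideal gens"
proof -
  assume v: "valid_path p" and b: "p \<notin> G"
  then obtain a k g where p: "p = P a k g" and ng: "\<not> goodP a k g"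
    unfolding valid_iff by auto
  consider "n \<le> k" | "a" "n' \<le> k" | "g" "n'' \<le> k" | "a" "g" "t \<le> k"
    using ng by (auto simp: goodP_def)
  then show ?thesis
  proof cases
    case 1
    have e: "bp p = kmul (kmul (bp (P a (k - n) False)) (bp (P False n False))) (bp (P False 0 g))"
      using 1 p by (simp add: kmul_bp)
    show ?thesis unfolding e
      by (intro gen_ideal.rmul gen_ideal.lmul gen_ideal.gen) (auto simp: gens_def bp_kQ)
  next
    case 2
    have e: "bp p = kmul (bp (P True n' False)) (bp (P False (k - n') g))"
      using 2 p by (simp add: kmul_bp)
    show ?thesis unfolding e
      by (intro gen_ideal.rmul gen_ideal.gen) (auto simp: gens_def bp_kQ)
  next
    case 3
    have e: "bp p = kmul (bp (P a (k - n'') False)) (bp (P False n'' True))"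
      using 3 p by (simp add: kmul_bp)
    show ?thesis unfolding e
      by (intro gen_ideal.lmul gen_ideal.gen) (auto simp: gens_def bp_kQ)
  next
    case 4
    have "(monom 1 k :: 'k poly) \<in> Vt"
    proof -
      have X: "[:0, 1:] ^ t = (monom 1 t :: 'k poly)" by (simp add: monom_altdef)
      have "(monom 1 k :: 'k poly) = [:0, 1:] ^ t * monom 1 (k - t)"
        using 4 unfolding X by (simp add: mult_monom)
      then show ?thesis by (auto simp: Vt_def)
    qed
    moreover have "alpha_v_gamma (monom 1 k) = bp p"
    proof
      fix q
      show "alpha_v_gamma (monom 1 k) q = bp p q"
      proof (cases "\<exists>i. q = P True i True")
        case True
        then obtain i where "q = P True i True" by blast
        then show ?thesis using 4 p by (auto simp: avg_P bp_def coeff_monom)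
      next
        case False
        then show ?thesis using 4 p by (auto simp: avg_0 bp_def)
      qed
    qed
    ultimately show ?thesis by (metis gen_ideal.gen gens_def image_eqI UnI2)
  qed
qed

lemma sum_bp_in: "finite S \<Longrightarrow> (\<forall>p\<in>S. (bp p :: path \<Rightarrow> 'k::field) \<in> gen_ideal gens) \<Longrightarrow> (\<lambda>r. \<Sum>p\<in>S. (c :: path \<Rightarrow> 'k) p * bp p r) \<in> gen_ideal gens"
proof (induction S rule: finite_induct)
  case empty
  then show ?case using gen_ideal.zero by (simp add: kzero_def)
next
  case (insert x S)
  have "(\<lambda>r. \<Sum>p\<in>insert x S. c p * bp p r) = kadd (ksmul (c x) (bp x)) (\<lambda>r. \<Sum>p\<in>S. c p * bp p r)"
    using insert by (simp add: kadd_def ksmul_def)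
  moreover have "kadd (ksmul (c x) (bp x)) (\<lambda>r. \<Sum>p\<in>S. c p * bp p r) \<in> gen_ideal gens"
  proof -
    have bx: "(bp x :: path \<Rightarrow> 'k) \<in> gen_ideal gens" using insert.prems by simp
    have rest: "(\<lambda>r. \<Sum>p\<in>S. c p * bp p r) \<in> gen_ideal gens" using insert.IH insert.prems by simp
    show ?thesis by (intro gen_ideal.add gen_ideal.smul bx rest)
  qed
  ultimately show ?case by simp
qed

lemma II_char: "(II :: (path \<Rightarrow> 'k::field) set) = {f \<in> kQ. badsupp f}"
proof
  show "(II :: (path \<Rightarrow> 'k::field) set) \<subseteq> {f \<in> kQ. badsupp f}"
    using ideal_sub by (auto simp: II_gen)
next
  show "{f \<in> kQ. badsupp f} \<subseteq> (II :: (path \<Rightarrow> 'k::field) set)"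
  proof
    fix f :: "path \<Rightarrow> 'k" assume "f \<in> {f \<in> kQ. badsupp f}"
    then have f: "f \<in> kQ" "badsupp f" by auto
    let ?S = "{p. f p \<noteq> 0}"
    have fin: "finite ?S" using f by (simp add: kQ_def)
    have "f = (\<lambda>r. \<Sum>p\<in>?S. f p * bp p r)"
    proof
      fix r
      show "f r = (\<Sum>p\<in>?S. f p * bp p r)"
      proof (cases "f r = 0")
        case True
        have "(\<Sum>p\<in>?S. f p * bp p r) = 0" using True by (intro sum.neutral) (auto simp: bp_def)
        then show ?thesis using True by simp
      next
        case False
        then have "(\<Sum>p\<in>?S. f p * bp p r) = f r * bp r r"
          using fin by (subst sum.remove[of _ r]) (auto simp: bp_def intro!: sum.neutral split: if_splits)
        then show ?thesis by (simp add: bp_def)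
      qed
    qed
    moreover have "(\<lambda>r. \<Sum>p\<in>?S. f p * bp p r) \<in> gen_ideal gens"
      using f by (intro sum_bp_in fin) (auto simp: kQ_def badsupp_def intro: bp_bad_in)
    ultimately show "f \<in> II" by (simp add: II_gen)
  qed
qed

end



context HH begin

definition supG :: "(path \<Rightarrow> 'k::field) \<Rightarrow> bool" where "supG f \<longleftrightarrow> (\<forall>p. p \<notin> G \<longrightarrow> f p = 0)"
definition trunc :: "(path \<Rightarrow> 'k::field) \<Rightarrow> path \<Rightarrow> 'k" where "trunc f = (\<lambda>p. if p \<in> G then f p else 0)"
definition vec :: "(path \<Rightarrow> 'k::field) set \<Rightarrow> path \<Rightarrow> 'k" where "vec A = trunc (rep A)"
definition emb :: "(path \<Rightarrow> 'k::field) \<Rightarrow> (path \<Rightarrow> 'k) set" where "emb h = coset II h"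
definition LL :: "(path \<Rightarrow> 'k::field) set set" where "LL = Lam II"
definition sm :: "'k::field \<Rightarrow> (path \<Rightarrow> 'k) \<Rightarrow> path \<Rightarrow> 'k" where "sm c f = (\<lambda>p. c * f p)"

definition tm :: "path \<Rightarrow> path \<Rightarrow> path \<Rightarrow> 'k::field" where
  "tm p q r = (if pmul p q = Some r \<and> r \<in> G then 1 else 0)"
definition cm :: "(path \<Rightarrow> 'k::field) \<Rightarrow> (path \<Rightarrow> 'k) \<Rightarrow> path \<Rightarrow> 'k" where
  "cm f g = (\<lambda>r. \<Sum>p\<in>G. \<Sum>q\<in>G. f p * g q * tm p q r)"

lemma diff_kQ: "f \<in> kQ \<Longrightarrow> g \<in> kQ \<Longrightarrow> (\<lambda>p. f p - g p) \<in> kQ"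
proof -
  assume f: "f \<in> kQ" and g: "g \<in> kQ"
  have "{p. f p - g p \<noteq> 0} \<subseteq> {p. f p \<noteq> 0} \<union> {p. g p \<noteq> 0}" by auto
  moreover have "\<forall>p. f p - g p \<noteq> 0 \<longrightarrow> valid_path p"
    using f g by (metis (mono_tags, lifting) kQ_def mem_Collect_eq right_minus_eq)
  ultimately show ?thesis using f g unfolding kQ_def by (auto intro: finite_subset)
qed

lemma coset_char: "f \<in> kQ \<Longrightarrow> coset II f = {y \<in> kQ. \<forall>p\<in>G. y p = f p}"
  unfolding coset_def II_char badsupp_def
  by (auto simp: diff_kQ)

lemma supG_kQ: "supG h \<Longrightarrow> h \<in> kQ"
proof -
  assume h: "supG h"
  have "{p. h p \<noteq> 0} \<subseteq> G" using h by (auto simp: supG_def)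
  then have "finite {p. h p \<noteq> 0}" by (rule finite_subset) simp
  moreover have "\<forall>p. h p \<noteq> 0 \<longrightarrow> valid_path p" using h G_valid by (auto simp: supG_def)
  ultimately show ?thesis by (simp add: kQ_def)
qed

lemma supG_trunc[simp]: "supG (trunc f)" by (simp add: supG_def trunc_def)

lemma trunc_supG: "supG f \<Longrightarrow> trunc f = f" by (auto simp: supG_def trunc_def)

lemma coset_trunc: "f \<in> kQ \<Longrightarrow> coset II f = emb (trunc f)"
  unfolding emb_def using supG_kQ[OF supG_trunc[of f]] by (simp add: coset_char trunc_def)

lemma LL_cases: "A \<in> LL \<Longrightarrow> \<exists>f\<in>kQ. A = coset II f"
  by (auto simp: LL_def Lam_def)

lemma self_coset: "f \<in> kQ \<Longrightarrow> f \<in> coset II f" by (simp add: coset_char)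

lemma rep_mem: "A \<in> LL \<Longrightarrow> rep A \<in> A"
  unfolding rep_def using LL_cases self_coset by (metis someI)

lemma vec_coset: "f \<in> kQ \<Longrightarrow> vec (coset II f) = trunc f"
proof -
  assume f: "f \<in> kQ"
  then have "coset II f \<in> LL" by (auto simp: LL_def Lam_def)
  then have "rep (coset II f) \<in> coset II f" by (rule rep_mem)
  then show ?thesis using f by (auto simp: vec_def trunc_def coset_char)
qed

lemma vec_emb[simp]: "supG h \<Longrightarrow> vec (emb h) = h"
  by (simp add: emb_def vec_coset supG_kQ trunc_supG)

lemma emb_LL: "supG h \<Longrightarrow> emb h \<in> LL"
  by (auto simp: emb_def LL_def Lam_def supG_kQ)

lemma vec_supG[simp]: "supG (vec A)" by (simp add: vec_def)

lemma emb_vec: "A \<in> LL \<Longrightarrow> emb (vec A) = A"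
proof -
  assume "A \<in> LL"
  then obtain f where f: "f \<in> kQ" "A = coset II f" using LL_cases by blast
  then show ?thesis by (simp add: vec_coset coset_trunc)
qed

lemma LL_eqI: "A \<in> LL \<Longrightarrow> B \<in> LL \<Longrightarrow> vec A = vec B \<Longrightarrow> A = B"
  by (metis emb_vec)

lemma rep_kQ: "A \<in> LL \<Longrightarrow> rep A \<in> kQ"
  using rep_mem LL_cases coset_def by fastforce

lemma supG_add[simp]: "supG f \<Longrightarrow> supG g \<Longrightarrow> supG (f + g)" by (simp add: supG_def)
lemma supG_diff[simp]: "supG f \<Longrightarrow> supG g \<Longrightarrow> supG (f - g)" by (simp add: supG_def)
lemma supG_sm[simp]: "supG f \<Longrightarrow> supG (sm c f)" by (simp add: supG_def sm_def)
lemma supG_zero[simp]: "supG 0" by (simp add: supG_def)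
lemma tm_notG: "r \<notin> G \<Longrightarrow> tm p q r = 0" by (simp add: tm_def)
lemma supG_cm[simp]: "supG (cm f g)" by (simp add: supG_def cm_def tm_notG)
lemma supG_bp[simp]: "p \<in> G \<Longrightarrow> supG (bp p)" by (auto simp: supG_def bp_def)

lemma qzero_eq: "qzero II = (emb 0 :: (path \<Rightarrow> 'k::field) set)"
proof -
  have "trunc kzero = (0 :: path \<Rightarrow> 'k::field)" by (auto simp: trunc_def kzero_def)
  then show ?thesis unfolding qzero_def by (simp add: coset_trunc)
qed

lemma qadd_eq: "A \<in> LL \<Longrightarrow> B \<in> LL \<Longrightarrow> qadd II A B = emb (vec A + vec B)"
proof -
  assume A: "A \<in> LL" and B: "B \<in> LL"
  have "kadd (rep A) (rep B) \<in> kQ" using A B by (simp add: kadd_kQ rep_kQ)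
  moreover have "trunc (kadd (rep A) (rep B)) = vec A + vec B"
    by (auto simp: trunc_def kadd_def vec_def)
  ultimately show ?thesis unfolding qadd_def by (simp add: coset_trunc)
qed

lemma qsmul_eq: "A \<in> LL \<Longrightarrow> qsmul II c A = emb (sm c (vec A))"
proof -
  assume A: "A \<in> LL"
  have "ksmul c (rep A) \<in> kQ" using A by (simp add: ksmul_kQ rep_kQ)
  moreover have "trunc (ksmul c (rep A)) = sm c (vec A)"
    by (auto simp: trunc_def ksmul_def vec_def sm_def)
  ultimately show ?thesis unfolding qsmul_def by (simp add: coset_trunc)
qed

lemma kmul_cm: "f \<in> kQ \<Longrightarrow> g \<in> kQ \<Longrightarrow> trunc (kmul f g) = cm (trunc f) (trunc g)"
proof (rule ext)
  fix r
  assume f: "f \<in> kQ" and g: "g \<in> kQ"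
  show "trunc (kmul f g) r = cm (trunc f) (trunc g) r"
  proof (cases "r \<in> G")
    case False
    then show ?thesis by (simp add: trunc_def cm_def tm_notG)
  next
    case True
    let ?S = "{(p, q). f p \<noteq> 0 \<and> g q \<noteq> 0 \<and> pmul p q = Some r}"
    have sub: "?S \<subseteq> G \<times> G"
    proof
      fix x assume "x \<in> ?S"
      then obtain p q where x: "x = (p, q)" "f p \<noteq> 0" "g q \<noteq> 0" "pmul p q = Some r" by blast
      have "valid_path p" "valid_path q" using f g x by (auto simp: kQ_def)
      then show "x \<in> G \<times> G" using sub_good x True by blast
    qed
    have "kmul f g r = (\<Sum>(p, q)\<in>?S. f p * g q)" by (simp add: kmul_def)
    also have "\<dots> = (\<Sum>(p, q)\<in>G \<times> G. trunc f p * trunc g q * tm p q r)"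
      by (rule sum.mono_neutral_cong_left) (use sub True in \<open>auto simp: trunc_def tm_def split: if_splits\<close>)
    also have "\<dots> = cm (trunc f) (trunc g) r"
      by (simp add: cm_def sum.cartesian_product)
    finally show ?thesis using True by (simp add: trunc_def)
  qed
qed

lemma qmul_eq: "A \<in> LL \<Longrightarrow> B \<in> LL \<Longrightarrow> qmul II A B = emb (cm (vec A) (vec B))"
proof -
  assume A: "A \<in> LL" and B: "B \<in> LL"
  have "kmul (rep A) (rep B) \<in> kQ" using A B by (simp add: kmul_kQ rep_kQ)
  moreover have "trunc (kmul (rep A) (rep B)) = cm (vec A) (vec B)"
    using A B by (simp add: kmul_cm rep_kQ vec_def)
  ultimately show ?thesis unfolding qmul_def by (simp add: coset_trunc)
qed

lemma qzero_LL: "qzero II \<in> LL" by (simp add: qzero_eq emb_LL)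
lemma qadd_LL: "A \<in> LL \<Longrightarrow> B \<in> LL \<Longrightarrow> qadd II A B \<in> LL" by (simp add: qadd_eq emb_LL)
lemma qsmul_LL: "A \<in> LL \<Longrightarrow> qsmul II c A \<in> LL" by (simp add: qsmul_eq emb_LL)
lemma qmul_LL: "A \<in> LL \<Longrightarrow> B \<in> LL \<Longrightarrow> qmul II A B \<in> LL" by (simp add: qmul_eq emb_LL)

lemma vec_qadd: "A \<in> LL \<Longrightarrow> B \<in> LL \<Longrightarrow> vec (qadd II A B) = vec A + vec B" by (simp add: qadd_eq)
lemma vec_qsmul: "A \<in> LL \<Longrightarrow> vec (qsmul II c A) = sm c (vec A)" by (simp add: qsmul_eq)
lemma vec_qmul: "A \<in> LL \<Longrightarrow> B \<in> LL \<Longrightarrow> vec (qmul II A B) = cm (vec A) (vec B)" by (simp add: qmul_eq)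
lemma vec_qzero: "vec (qzero II) = (0 :: path \<Rightarrow> 'k::field)" by (simp add: qzero_eq)

definition ad :: "(path \<Rightarrow> 'k::field) \<Rightarrow> (path \<Rightarrow> 'k) \<Rightarrow> path \<Rightarrow> 'k" where
  "ad x f = cm x f - cm f x"

lemma inner_LL: "X \<in> LL \<Longrightarrow> A \<in> LL \<Longrightarrow> inner_der II X A \<in> LL"
  by (simp add: inner_der_def qadd_LL qsmul_LL qmul_LL)

lemma vec_inner: "X \<in> LL \<Longrightarrow> A \<in> LL \<Longrightarrow> vec (inner_der II X A) = ad (vec X) (vec A)"
  by (simp add: inner_der_def vec_qadd qsmul_LL qmul_LL vec_qsmul vec_qmul ad_def sm_def fun_eq_iff)

end



lemma pmul_Tr: "pmul p (Triv i) = (if psrc p = i then Some p else None)"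
  by (cases p) (auto simp: pmul_def)
lemma pmul_Tl: "pmul (Triv i) q = (if ptgt q = i then Some q else None)"
  by (auto simp: pmul_def)

lemma P_F0F: "P False 0 False = Triv 2" by (simp add: P_def)

context HH begin

lemma cm_addL: "cm (f + g) h = cm f h + cm g h"
  by (simp add: cm_def fun_eq_iff distrib_right sum.distrib)
lemma cm_addR: "cm f (g + h) = cm f g + cm f h"
  by (simp add: cm_def fun_eq_iff distrib_left distrib_right sum.distrib)
lemma cm_diffL: "cm (f - g) h = cm f h - cm g h"
  by (simp add: cm_def fun_eq_iff left_diff_distrib sum_subtractf)
lemma cm_diffR: "cm f (g - h) = cm f g - cm f h"
  by (simp add: cm_def fun_eq_iff right_diff_distrib left_diff_distrib sum_subtractf)
lemma cm_smL: "cm (sm c f) g = sm c (cm f g)"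
  by (simp add: cm_def fun_eq_iff sm_def sum_distrib_left mult.assoc)
lemma cm_smR: "cm f (sm c g) = sm c (cm f g)"
  by (simp add: cm_def fun_eq_iff sm_def sum_distrib_left mult_ac)
lemma cm_zeroL[simp]: "cm 0 g = 0" by (simp add: cm_def fun_eq_iff)
lemma cm_zeroR[simp]: "cm f 0 = 0" by (simp add: cm_def fun_eq_iff)

lemma cm_bpL: "u \<in> G \<Longrightarrow> cm (bp u) g r = (\<Sum>q\<in>G. g q * tm u q r)"
proof -
  assume u: "u \<in> G"
  have "cm (bp u) g r = (\<Sum>p\<in>G. if p = u then (\<Sum>q\<in>G. g q * tm u q r) else 0)"
    unfolding cm_def by (intro sum.cong) (auto simp: bp_def)
  also have "\<dots> = (\<Sum>q\<in>G. g q * tm u q r)" using u by simp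
  finally show ?thesis .
qed

lemma cm_bpR: "v \<in> G \<Longrightarrow> cm f (bp v) r = (\<Sum>p\<in>G. f p * tm p v r)"
proof -
  assume v: "v \<in> G"
  have "cm f (bp v) r = (\<Sum>p\<in>G. \<Sum>q\<in>G. if q = v then f p * tm p v r else 0)"
    unfolding cm_def by (intro sum.cong) (auto simp: bp_def)
  also have "\<dots> = (\<Sum>p\<in>G. f p * tm p v r)" using v by simp
  finally show ?thesis .
qed

lemma cm_bpbp: "u \<in> G \<Longrightarrow> v \<in> G \<Longrightarrow> cm (bp u) (bp v) = tm u v"
proof (rule ext)
  fix r assume u: "u \<in> G" and v: "v \<in> G"
  have "cm (bp u) (bp v) r = (\<Sum>q\<in>G. bp v q * tm u q r)"
    using u by (simp add: cm_bpL)
  also have "\<dots> = (\<Sum>q\<in>G. if q = v then tm u v r else 0)"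
    by (intro sum.cong) (auto simp: bp_def)
  also have "\<dots> = tm u v r" using v by simp
  finally show "cm (bp u) (bp v) r = tm u v r" .
qed

lemma tm_bp: "pmul u v = Some w \<Longrightarrow> w \<in> G \<Longrightarrow> tm u v = bp w"
  by (auto simp: tm_def bp_def fun_eq_iff)
lemma tm_zero: "pmul u v = Some w \<Longrightarrow> w \<notin> G \<Longrightarrow> tm u v = 0"
  by (auto simp: tm_def fun_eq_iff)
lemma tm_None: "pmul u v = None \<Longrightarrow> tm u v = 0"
  by (auto simp: tm_def fun_eq_iff)

lemma cm_expL: "cm f g r = (\<Sum>p\<in>G. f p * cm (bp p) g r)"
proof -
  have "cm f g r = (\<Sum>p\<in>G. \<Sum>q\<in>G. f p * g q * tm p q r)" by (simp add: cm_def)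
  also have "\<dots> = (\<Sum>p\<in>G. f p * cm (bp p) g r)"
    by (intro sum.cong refl) (simp add: cm_bpL sum_distrib_left mult_ac)
  finally show ?thesis .
qed

lemma swap_mult: "(\<Sum>w\<in>G. (\<Sum>p\<in>G. x p * A p w) * B w) = (\<Sum>p\<in>G. (x p :: 'k::field) * (\<Sum>w\<in>G. A p w * B w))"
  by (simp add: sum_distrib_right sum_distrib_left mult.assoc) (rule sum.swap)

lemma swap_mult2: "(\<Sum>p\<in>G. C p * (\<Sum>q\<in>G. x q * A p q)) = (\<Sum>q\<in>G. (x q :: 'k::field) * (\<Sum>p\<in>G. C p * A p q))"
  by (simp add: sum_distrib_right sum_distrib_left mult_ac) (rule sum.swap)

lemma cm_expR: "cm f g r = (\<Sum>q\<in>G. g q * cm f (bp q) r)"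
proof -
  have "cm f g r = (\<Sum>q\<in>G. \<Sum>p\<in>G. f p * g q * tm p q r)" unfolding cm_def by (rule sum.swap)
  also have "\<dots> = (\<Sum>q\<in>G. g q * cm f (bp q) r)"
    by (intro sum.cong refl) (simp add: cm_bpR sum_distrib_left mult_ac)
  finally show ?thesis .
qed

lemma basis_exp: "supG f \<Longrightarrow> f = (\<lambda>r. \<Sum>p\<in>G. f p * bp p r)"
proof (rule ext)
  fix r assume f: "supG f"
  have "(\<Sum>p\<in>G. f p * bp p r) = (\<Sum>p\<in>G. if p = r then f r else 0)"
    by (intro sum.cong) (auto simp: bp_def)
  also have "\<dots> = f r" using f by (auto simp: supG_def)
  finally show "f r = (\<Sum>p\<in>G. f p * bp p r)" by simp
qed

lemma sum_tmL: "(\<Sum>u\<in>G. tm p q u * X u) = (case pmul p q of None \<Rightarrow> 0 | Some u \<Rightarrow> if u \<in> G then X u else 0)"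
proof (cases "pmul p q")
  case None
  then show ?thesis by (simp add: tm_def)
next
  case (Some w)
  have "(\<Sum>u\<in>G. tm p q u * X u) = (\<Sum>u\<in>G. if w = u then X u else 0)"
    using Some by (intro sum.cong) (auto simp: tm_def)
  then show ?thesis using Some by simp
qed

lemma goodP_L: "goodP a (k + k') g \<Longrightarrow> goodP a k False" by (auto simp: goodP_def)
lemma goodP_R: "goodP a (k + k') g \<Longrightarrow> goodP False k' g" by (auto simp: goodP_def)
lemma goodP_L3: "goodP a (k + (k' + k'')) g \<Longrightarrow> goodP a (k + k') False" by (auto simp: goodP_def)

lemma tm_assoc0: "p \<in> G \<Longrightarrow> q \<in> G \<Longrightarrow> w \<in> G \<Longrightarrow>
  (case pmul p q of None \<Rightarrow> 0 | Some u \<Rightarrow> if u \<in> G then tm u w r else 0) =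
  (case pmul q w of None \<Rightarrow> 0 | Some v \<Rightarrow> if v \<in> G then tm p v r else (0::'k::field))"
  apply (elim G_cases)
  apply (simp_all add: tm_def add.assoc)
  apply (auto dest: goodP_L goodP_R goodP_L3)
  done

lemma tm_assoc: "p \<in> G \<Longrightarrow> q \<in> G \<Longrightarrow> w \<in> G \<Longrightarrow>
  (\<Sum>u\<in>G. tm p q u * tm u w r) = (\<Sum>v\<in>G. tm q w v * (tm p v r :: 'k::field))"
  by (simp only: sum_tmL tm_assoc0)

lemma A1: "u \<in> G \<Longrightarrow> v \<in> G \<Longrightarrow> cm (cm x (bp u)) (bp v) = cm x (cm (bp u) (bp v))"
proof (rule ext)
  fix r assume u: "u \<in> G" and v: "v \<in> G"
  have "cm (cm x (bp u)) (bp v) r = (\<Sum>w\<in>G. (\<Sum>p\<in>G. x p * tm p u w) * tm w v r)"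
    using u v by (simp add: cm_bpR)
  also have "\<dots> = (\<Sum>p\<in>G. x p * (\<Sum>w\<in>G. tm p u w * tm w v r))"
    by (rule swap_mult)
  also have "\<dots> = (\<Sum>p\<in>G. x p * (\<Sum>q\<in>G. tm u v q * tm p q r))"
    using u v by (intro sum.cong refl) (simp add: tm_assoc)
  also have "\<dots> = cm x (cm (bp u) (bp v)) r"
    using u v by (simp add: cm_bpbp) (simp add: cm_def sum_distrib_left mult_ac)
  finally show "cm (cm x (bp u)) (bp v) r = cm x (cm (bp u) (bp v)) r" .
qed

lemma A2: "u \<in> G \<Longrightarrow> v \<in> G \<Longrightarrow> cm (cm (bp u) x) (bp v) = cm (bp u) (cm x (bp v))"
proof (rule ext)
  fix r assume u: "u \<in> G" and v: "v \<in> G"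
  have "cm (cm (bp u) x) (bp v) r = (\<Sum>w\<in>G. (\<Sum>q\<in>G. x q * tm u q w) * tm w v r)"
    using u v by (simp add: cm_bpR cm_bpL)
  also have "\<dots> = (\<Sum>q\<in>G. x q * (\<Sum>w\<in>G. tm u q w * tm w v r))"
    by (rule swap_mult)
  also have "\<dots> = (\<Sum>q\<in>G. x q * (\<Sum>w\<in>G. tm q v w * tm u w r))"
    using u v by (intro sum.cong refl) (simp add: tm_assoc)
  also have "\<dots> = (\<Sum>w\<in>G. (\<Sum>q\<in>G. x q * tm q v w) * tm u w r)"
    by (rule swap_mult[symmetric])
  also have "\<dots> = cm (bp u) (cm x (bp v)) r"
    using u v by (simp add: cm_bpR cm_bpL mult_ac)
  finally show "cm (cm (bp u) x) (bp v) r = cm (bp u) (cm x (bp v)) r" .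
qed

lemma A3: "u \<in> G \<Longrightarrow> v \<in> G \<Longrightarrow> cm (cm (bp u) (bp v)) x = cm (bp u) (cm (bp v) x)"
proof (rule ext)
  fix r assume u: "u \<in> G" and v: "v \<in> G"
  have "cm (cm (bp u) (bp v)) x r = (\<Sum>p\<in>G. tm u v p * (\<Sum>q\<in>G. x q * tm p q r))"
    using u v by (simp add: cm_bpbp cm_expL[of "tm u v"] cm_bpL)
  also have "\<dots> = (\<Sum>q\<in>G. x q * (\<Sum>p\<in>G. tm u v p * tm p q r))"
    by (rule swap_mult2)
  also have "\<dots> = (\<Sum>q\<in>G. x q * (\<Sum>w\<in>G. tm v q w * tm u w r))"
    using u v by (intro sum.cong refl) (simp add: tm_assoc)
  also have "\<dots> = (\<Sum>w\<in>G. (\<Sum>q\<in>G. x q * tm v q w) * tm u w r)"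
    by (simp add: sum_distrib_left sum_distrib_right mult_ac) (rule sum.swap)
  also have "\<dots> = cm (bp u) (cm (bp v) x) r"
    using u v by (simp add: cm_bpL mult_ac)
  finally show "cm (cm (bp u) (bp v)) x r = cm (bp u) (cm (bp v) x) r" .
qed

lemma ad_leib: "u \<in> G \<Longrightarrow> v \<in> G \<Longrightarrow> ad x (cm (bp u) (bp v)) = cm (ad x (bp u)) (bp v) + cm (bp u) (ad x (bp v))"
  by (simp add: ad_def cm_diffL cm_diffR A1 A2 A3)

end



context HH begin

definition fder :: "((path \<Rightarrow> 'k::field) \<Rightarrow> path \<Rightarrow> 'k) \<Rightarrow> bool" where
  "fder dd \<longleftrightarrow> (\<forall>f. supG f \<longrightarrow> supG (dd f))
     \<and> (\<forall>f g. supG f \<longrightarrow> supG g \<longrightarrow> dd (f + g) = dd f + dd g)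
     \<and> (\<forall>c f. supG f \<longrightarrow> dd (sm c f) = sm c (dd f))
     \<and> (\<forall>f g. supG f \<longrightarrow> supG g \<longrightarrow> dd (cm f g) = cm (dd f) g + cm f (dd g))"

lemma fder_supG: "fder dd \<Longrightarrow> supG f \<Longrightarrow> supG (dd f)" by (simp add: fder_def)
lemma fder_add: "fder dd \<Longrightarrow> supG f \<Longrightarrow> supG g \<Longrightarrow> dd (f + g) = dd f + dd g" by (simp add: fder_def)
lemma fder_sm: "fder dd \<Longrightarrow> supG f \<Longrightarrow> dd (sm c f) = sm c (dd f)" by (simp add: fder_def)
lemma fder_leib: "fder dd \<Longrightarrow> supG f \<Longrightarrow> supG g \<Longrightarrow> dd (cm f g) = cm (dd f) g + cm f (dd g)" by (simp add: fder_def)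

lemma sm0: "sm 0 f = 0" by (simp add: sm_def fun_eq_iff)

lemma fder_zero: "fder dd \<Longrightarrow> dd 0 = 0"
  using fder_sm[of dd 0 0] by (simp add: sm0)

lemma supG_sumbp: "S \<subseteq> G \<Longrightarrow> supG (\<lambda>r. \<Sum>p\<in>S. c p * bp p r)"
  by (auto simp: supG_def bp_def intro!: sum.neutral)

lemma fder_sum: "fder dd \<Longrightarrow> S \<subseteq> G \<Longrightarrow> dd (\<lambda>r. \<Sum>p\<in>S. c p * bp p r) = (\<lambda>r. \<Sum>p\<in>S. c p * dd (bp p) r)"
proof -
  assume dd: "fder dd" and S: "S \<subseteq> G"
  have "finite S" by (rule finite_subset[OF S]) simp
  then show ?thesis using S
  proof (induction S rule: finite_induct)
    case empty
    have "(\<lambda>r. \<Sum>p\<in>{}. c p * bp p r) = 0" by (simp add: fun_eq_iff)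
    moreover have "(\<lambda>r. \<Sum>p\<in>{}. c p * dd (bp p) r) = 0" by (simp add: fun_eq_iff)
    ultimately show ?case using fder_zero[OF dd] by simp
  next
    case (insert x S)
    have e: "(\<lambda>r. \<Sum>p\<in>insert x S. c p * bp p r) = sm (c x) (bp x) + (\<lambda>r. \<Sum>p\<in>S. c p * bp p r)"
      using insert.hyps by (simp add: sm_def fun_eq_iff)
    have e2: "(\<lambda>r. \<Sum>p\<in>insert x S. c p * dd (bp p) r) = sm (c x) (dd (bp x)) + (\<lambda>r. \<Sum>p\<in>S. c p * dd (bp p) r)"
      using insert.hyps by (simp add: sm_def fun_eq_iff)
    have x: "x \<in> G" and SG: "S \<subseteq> G" using insert.prems by auto
    have "dd (sm (c x) (bp x) + (\<lambda>r. \<Sum>p\<in>S. c p * bp p r)) = dd (sm (c x) (bp x)) + dd (\<lambda>r. \<Sum>p\<in>S. c p * bp p r)"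
      by (rule fder_add[OF dd]) (simp_all add: x SG supG_sumbp)
    also have "\<dots> = sm (c x) (dd (bp x)) + (\<lambda>r. \<Sum>p\<in>S. c p * dd (bp p) r)"
      using insert.IH[OF SG] fder_sm[OF dd, of "bp x" "c x"] x by simp
    finally show ?case unfolding e e2 .
  qed
qed

lemma fder_exp: "fder dd \<Longrightarrow> supG f \<Longrightarrow> dd f = (\<lambda>r. \<Sum>p\<in>G. f p * dd (bp p) r)"
  apply (subst (1) basis_exp[of f], assumption)
  apply (subst fder_sum, assumption, simp)
  apply simp
  done

lemma ad_exp: "ad x f = (\<lambda>r. \<Sum>p\<in>G. f p * ad x (bp p) r)"
  unfolding ad_def fun_eq_iff
  by (simp add: cm_expR[of x f] cm_expL[of f x] right_diff_distrib sum_subtractf)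

lemma der_eq_ad: "fder dd \<Longrightarrow> (\<forall>p\<in>G. dd (bp p) = ad x (bp p)) \<Longrightarrow> supG f \<Longrightarrow> dd f = ad x f"
  apply (subst fder_exp[of dd f], assumption, assumption)
  apply (subst ad_exp[of x f])
  apply simp
  done

lemma bp_prod: "u \<in> G \<Longrightarrow> v \<in> G \<Longrightarrow> pmul u v = Some w \<Longrightarrow> w \<in> G \<Longrightarrow> bp w = cm (bp u) (bp v)"
  by (simp add: cm_bpbp tm_bp)

lemma gen_close: "fder (dd :: (path \<Rightarrow> 'k::field) \<Rightarrow> path \<Rightarrow> 'k) \<Longrightarrow> u \<in> G \<Longrightarrow> v \<in> G \<Longrightarrow> pmul u v = Some w \<Longrightarrow> w \<in> G \<Longrightarrow>
   dd (bp u) = ad x (bp u) \<Longrightarrow> dd (bp v) = ad x (bp v) \<Longrightarrow> dd (bp w) = ad x (bp w)"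
proof -
  assume dd: "fder dd" and u: "u \<in> G" and v: "v \<in> G" and w: "pmul u v = Some w" "w \<in> G"
    and hu: "dd (bp u) = ad x (bp u)" and hv: "dd (bp v) = ad x (bp v)"
  have "(bp w :: path \<Rightarrow> 'k) = cm (bp u) (bp v)" using u v w by (rule bp_prod)
  then have "dd (bp w) = cm (dd (bp u)) (bp v) + cm (bp u) (dd (bp v))"
    using u v by (simp add: fder_leib[OF dd])
  also have "\<dots> = ad x (cm (bp u) (bp v))" unfolding hu hv by (rule ad_leib[OF u v, symmetric])
  also have "\<dots> = ad x (bp w)" using \<open>bp w = _\<close> by simp
  finally show ?thesis .
qed

lemma goodP_nA: "goodP True k g \<Longrightarrow> goodP False k g" by (auto simp: goodP_def)
lemma goodP_Suc: "goodP a (Suc k) g \<Longrightarrow> goodP a k g" by (auto simp: goodP_def)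

lemma sumR_uniq: "p0 \<in> G \<Longrightarrow> (\<And>p. p \<in> G \<Longrightarrow> (pmul p v = Some r \<and> r \<in> G) = (p = p0)) \<Longrightarrow>
   (\<Sum>p\<in>G. f p * tm p v r) = (f p0 :: 'k::field)"
proof -
  assume p0: "p0 \<in> G" and h: "\<And>p. p \<in> G \<Longrightarrow> (pmul p v = Some r \<and> r \<in> G) = (p = p0)"
  have "(\<Sum>p\<in>G. f p * tm p v r) = (\<Sum>p\<in>G. if p = p0 then f p else 0)"
    by (intro sum.cong refl) (simp add: tm_def h)
  then show ?thesis using p0 by simp
qed

lemma sumR_none: "(\<And>p. p \<in> G \<Longrightarrow> \<not> (pmul p v = Some r \<and> r \<in> G)) \<Longrightarrow> (\<Sum>p\<in>G. f p * tm p v r) = (0 :: 'k::field)"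
proof -
  assume h: "\<And>p. p \<in> G \<Longrightarrow> \<not> (pmul p v = Some r \<and> r \<in> G)"
  show ?thesis by (rule sum.neutral) (use h in \<open>auto simp: tm_def\<close>)
qed

lemma sumL_uniq: "q0 \<in> G \<Longrightarrow> (\<And>q. q \<in> G \<Longrightarrow> (pmul u q = Some r \<and> r \<in> G) = (q = q0)) \<Longrightarrow>
   (\<Sum>q\<in>G. f q * tm u q r) = (f q0 :: 'k::field)"
proof -
  assume q0: "q0 \<in> G" and h: "\<And>q. q \<in> G \<Longrightarrow> (pmul u q = Some r \<and> r \<in> G) = (q = q0)"
  have "(\<Sum>q\<in>G. f q * tm u q r) = (\<Sum>q\<in>G. if q = q0 then f q else 0)"
    by (intro sum.cong refl) (simp add: tm_def h)
  then show ?thesis using q0 by simp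
qed

lemma sumL_none: "(\<And>q. q \<in> G \<Longrightarrow> \<not> (pmul u q = Some r \<and> r \<in> G)) \<Longrightarrow> (\<Sum>q\<in>G. f q * tm u q r) = (0 :: 'k::field)"
proof -
  assume h: "\<And>q. q \<in> G \<Longrightarrow> \<not> (pmul u q = Some r \<and> r \<in> G)"
  show ?thesis by (rule sum.neutral) (use h in \<open>auto simp: tm_def\<close>)
qed

lemma G_src: "r \<in> G \<Longrightarrow> psrc r \<in> {1, 2, 3}"
  by (erule G_cases) simp_all
lemma G_tgt: "r \<in> G \<Longrightarrow> ptgt r \<in> {1, 2, 3}"
  by (erule G_cases) simp_all

lemma T2_G[simp]: "Triv 2 \<in> G"
proof -
  have "P False 0 False \<in> G" using n2 by (simp add: goodP_def)
  then show ?thesis by (simp only: P_F0F)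
qed

lemma cmRe: "Triv i \<in> G \<Longrightarrow> r \<in> G \<Longrightarrow> cm f (bp (Triv i)) r = (if psrc r = i then f r else 0)"
proof -
  assume i: "Triv i \<in> G" and r: "r \<in> G"
  show ?thesis
  proof (cases "psrc r = i")
    case True
    have "(\<Sum>p\<in>G. f p * tm p (Triv i) r) = f r"
    proof (rule sumR_uniq[OF r])
      fix p assume "p \<in> G"
      show "(pmul p (Triv i) = Some r \<and> r \<in> G) = (p = r)" using True r by (auto simp: pmul_Tr)
    qed
    then show ?thesis using True i by (simp add: cm_bpR)
  next
    case False
    have "(\<Sum>p\<in>G. f p * tm p (Triv i) r) = 0"
    proof (rule sumR_none)
      fix p assume "p \<in> G"
      show "\<not> (pmul p (Triv i) = Some r \<and> r \<in> G)" using False by (auto simp: pmul_Tr)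
    qed
    then show ?thesis using False i by (simp add: cm_bpR)
  qed
qed

lemma cmLe: "Triv i \<in> G \<Longrightarrow> r \<in> G \<Longrightarrow> cm (bp (Triv i)) f r = (if ptgt r = i then f r else 0)"
proof -
  assume i: "Triv i \<in> G" and r: "r \<in> G"
  show ?thesis
  proof (cases "ptgt r = i")
    case True
    have "(\<Sum>q\<in>G. f q * tm (Triv i) q r) = f r"
    proof (rule sumL_uniq[OF r])
      fix q assume "q \<in> G"
      show "(pmul (Triv i) q = Some r \<and> r \<in> G) = (q = r)" using True r by (auto simp: pmul_Tl)
    qed
    then show ?thesis using True i by (simp add: cm_bpL)
  next
    case False
    have "(\<Sum>q\<in>G. f q * tm (Triv i) q r) = 0"
    proof (rule sumL_none)
      fix q assume "q \<in> G"
      show "\<not> (pmul (Triv i) q = Some r \<and> r \<in> G)" using False by (auto simp: pmul_Tl)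
    qed
    then show ?thesis using False i by (simp add: cm_bpL)
  qed
qed


lemma gen_principle:
  fixes dd :: "(path \<Rightarrow> 'k::field) \<Rightarrow> path \<Rightarrow> 'k"
  assumes dd: "fder dd"
    and e1: "dd (bp (Triv 1)) = ad x (bp (Triv 1))"
    and e2: "dd (bp (Triv 2)) = ad x (bp (Triv 2))"
    and e3: "dd (bp (Triv 3)) = ad x (bp (Triv 3))"
    and hA: "dd (bp (P True 0 False)) = ad x (bp (P True 0 False))"
    and hB: "dd (bp (P False 1 False)) = ad x (bp (P False 1 False))"
    and hC: "dd (bp (P False 0 True)) = ad x (bp (P False 0 True))"
    and p: "p \<in> G"
  shows "dd (bp p) = ad x (bp p)"
proof -
  have gB: "P False 1 False \<in> G" using n2 by (simp add: goodP_def)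
  have gA: "P True 0 False \<in> G" using n'1 n2 by (simp add: goodP_def)
  have F: "goodP False k g \<Longrightarrow> dd (bp (P False k g)) = ad x (bp (P False k g))" for k g
  proof (induction k)
    case 0
    show ?case
    proof (cases g)
      case True
      then show ?thesis using hC by simp
    next
      case False
      then show ?thesis using e2 by (simp add: P_F0F)
    qed
  next
    case (Suc k)
    have m: "pmul (P False 1 False) (P False k g) = Some (P False (Suc k) g)" by simp
    have gk: "P False k g \<in> G" using goodP_Suc[OF Suc.prems] by simp
    have "dd (bp (P False k g)) = ad x (bp (P False k g))" using Suc.IH goodP_Suc[OF Suc.prems] by blast
    moreover have "P False (Suc k) g \<in> G" using Suc.prems by simp
    ultimately show ?case using gen_close[OF dd gB gk m] hB by blast
  qed
  have T: "goodP True k g \<Longrightarrow> dd (bp (P True k g)) = ad x (bp (P True k g))" for k g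
  proof -
    assume g: "goodP True k g"
    have m: "pmul (P True 0 False) (P False k g) = Some (P True k g)" by simp
    have gk: "P False k g \<in> G" using goodP_nA[OF g] by simp
    have "dd (bp (P False k g)) = ad x (bp (P False k g))" using F goodP_nA[OF g] by blast
    moreover have "P True k g \<in> G" using g by simp
    ultimately show ?thesis using gen_close[OF dd gA gk m] hA by blast
  qed
  from p show ?thesis
  proof (cases rule: G_cases)
    case T1 then show ?thesis using e1 by simp
  next
    case T3 then show ?thesis using e3 by simp
  next
    case (PP a k g)
    show ?thesis
    proof (cases a)
      case True then show ?thesis using T PP by simp
    next
      case False then show ?thesis using F PP by simp
    qed
  qed
qed

lemma eqR: "p \<in> G \<Longrightarrow> g = g' \<Longrightarrow> j \<le> k \<Longrightarrow> (pmul p (P False j g') = Some (P a k g)) = (p = P a (k - j) False)"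
  by (erule G_cases) auto
lemma neqR: "p \<in> G \<Longrightarrow> \<not> (g = g' \<and> j \<le> k) \<Longrightarrow> pmul p (P False j g') \<noteq> Some (P a k g)"
  by (erule G_cases) auto
lemma neqR_T: "p \<in> G \<Longrightarrow> i = 1 \<or> i = 3 \<Longrightarrow> pmul p (P False j g') \<noteq> Some (Triv i)"
  by (erule G_cases) auto
lemma eqL: "q \<in> G \<Longrightarrow> a = a' \<Longrightarrow> j \<le> k \<Longrightarrow> (pmul (P a' j False) q = Some (P a k g)) = (q = P False (k - j) g)"
  by (erule G_cases) auto
lemma neqL: "q \<in> G \<Longrightarrow> \<not> (a = a' \<and> j \<le> k) \<Longrightarrow> pmul (P a' j False) q \<noteq> Some (P a k g)"
  by (erule G_cases) auto
lemma neqL_T: "q \<in> G \<Longrightarrow> i = 1 \<or> i = 3 \<Longrightarrow> pmul (P a' j False) q \<noteq> Some (Triv i)"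
  by (erule G_cases) auto

lemma cmRG: "P False j g' \<in> G \<Longrightarrow> P a k g \<in> G \<Longrightarrow>
   cm f (bp (P False j g')) (P a k g) = (if g = g' \<and> j \<le> k then f (P a (k - j) False) else 0)"
proof -
  assume j: "P False j g' \<in> G" and r: "P a k g \<in> G"
  show ?thesis
  proof (cases "g = g' \<and> j \<le> k")
    case True
    have p0: "P a (k - j) False \<in> G" using r True by (auto simp: goodP_def)
    have "(\<Sum>p\<in>G. f p * tm p (P False j g') (P a k g)) = f (P a (k - j) False)"
      by (rule sumR_uniq[OF p0]) (use True r eqR in auto)
    then show ?thesis using True j by (simp add: cm_bpR)
  next
    case False
    have "(\<Sum>p\<in>G. f p * tm p (P False j g') (P a k g)) = 0"
      by (rule sumR_none) (use False neqR in blast)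
    then show ?thesis using j by (subst if_not_P[OF False]) (simp add: cm_bpR)
  qed
qed

lemma cmRG_T: "P False j g' \<in> G \<Longrightarrow> i = 1 \<or> i = 3 \<Longrightarrow> cm f (bp (P False j g')) (Triv i) = 0"
proof -
  assume j: "P False j g' \<in> G" and i: "i = 1 \<or> i = 3"
  have "(\<Sum>p\<in>G. f p * tm p (P False j g') (Triv i)) = 0"
    by (rule sumR_none) (use i neqR_T in blast)
  then show ?thesis using j by (simp add: cm_bpR)
qed

lemma cmLG: "P a' j False \<in> G \<Longrightarrow> P a k g \<in> G \<Longrightarrow>
   cm (bp (P a' j False)) f (P a k g) = (if a = a' \<and> j \<le> k then f (P False (k - j) g) else 0)"
proof -
  assume j: "P a' j False \<in> G" and r: "P a k g \<in> G"
  show ?thesis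
  proof (cases "a = a' \<and> j \<le> k")
    case True
    have q0: "P False (k - j) g \<in> G" using r True by (auto simp: goodP_def)
    have "(\<Sum>q\<in>G. f q * tm (P a' j False) q (P a k g)) = f (P False (k - j) g)"
      by (rule sumL_uniq[OF q0]) (use True r eqL in auto)
    then show ?thesis using True j by (simp add: cm_bpL)
  next
    case False
    have "(\<Sum>q\<in>G. f q * tm (P a' j False) q (P a k g)) = 0"
      by (rule sumL_none) (use False neqL in blast)
    then show ?thesis using j by (subst if_not_P[OF False]) (simp add: cm_bpL)
  qed
qed

lemma cmLG_T: "P a' j False \<in> G \<Longrightarrow> i = 1 \<or> i = 3 \<Longrightarrow> cm (bp (P a' j False)) f (Triv i) = 0"
proof -
  assume j: "P a' j False \<in> G" and i: "i = 1 \<or> i = 3"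
  have "(\<Sum>q\<in>G. f q * tm (P a' j False) q (Triv i)) = 0"
    by (rule sumL_none) (use i neqL_T in blast)
  then show ?thesis using j by (simp add: cm_bpL)
qed

lemma eqRA: "p \<in> G \<Longrightarrow> (pmul p (P True 0 False) = Some r) = (p = Triv 1 \<and> r = P True 0 False)"
  by (erule G_cases) auto
lemma eqLC: "q \<in> G \<Longrightarrow> (pmul (P False 0 True) q = Some r) = (q = Triv 3 \<and> r = P False 0 True)"
  by (erule G_cases) auto

lemma cmRA: "P True 0 False \<in> G \<Longrightarrow> r \<in> G \<Longrightarrow> cm f (bp (P True 0 False)) r = (if r = P True 0 False then f (Triv 1) else 0)"
proof -
  assume a: "P True 0 False \<in> G" and r: "r \<in> G"
  show ?thesis
  proof (cases "r = P True 0 False")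
    case True
    have "(\<Sum>p\<in>G. f p * tm p (P True 0 False) r) = f (Triv 1)"
      by (rule sumR_uniq) (use True r eqRA in auto)
    then show ?thesis using True a by (simp add: cm_bpR)
  next
    case False
    have "(\<Sum>p\<in>G. f p * tm p (P True 0 False) r) = 0"
      by (rule sumR_none) (use False eqRA in blast)
    then show ?thesis using False a by (simp add: cm_bpR)
  qed
qed

lemma cmLC: "P False 0 True \<in> G \<Longrightarrow> r \<in> G \<Longrightarrow> cm (bp (P False 0 True)) f r = (if r = P False 0 True then f (Triv 3) else 0)"
proof -
  assume a: "P False 0 True \<in> G" and r: "r \<in> G"
  show ?thesis
  proof (cases "r = P False 0 True")
    case True
    have "(\<Sum>q\<in>G. f q * tm (P False 0 True) q r) = f (Triv 3)"
      by (rule sumL_uniq) (use True r eqLC in auto)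
    then show ?thesis using True a by (simp add: cm_bpL)
  next
    case False
    have "(\<Sum>q\<in>G. f q * tm (P False 0 True) q r) = 0"
      by (rule sumL_none) (use False eqLC in blast)
    then show ?thesis using False a by (simp add: cm_bpL)
  qed
qed

end



context HH begin

lemma Triv_G: "i \<in> {1, 2, 3} \<Longrightarrow> Triv i \<in> G"
  by auto

lemma ad_addx: "ad (x + y) f = ad x f + ad y f"
  by (simp add: ad_def cm_addL cm_addR)

lemma ad_diff: "ad x (f - g) = ad x f - ad x g"
  by (simp add: ad_def cm_diffL cm_diffR)

lemma supG_ad[simp]: "supG (ad x f)" by (simp add: ad_def)

lemma idem_arith:
  fixes u :: "nat \<Rightarrow> 'k::field"
  assumes A: "\<And>i. i \<in> {1,2,3} \<Longrightarrow> u i = (if s = i then u i else 0) + (if t' = i then u i else 0)"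
    and B: "s \<noteq> t' \<Longrightarrow> 0 = u t' + u s"
    and i: "i \<in> {1,2,3}" and s: "s \<in> {1,2,3}" and t: "t' \<in> {1,2,3}"
  shows "u i = (if s = i then u s else 0) - (if t' = i then u s else 0)"
proof (cases "s = i")
  case True
  show ?thesis
  proof (cases "t' = i")
    case True
    with \<open>s = i\<close> A[OF i] have "u i = u i + u i" by simp
    then have "u i = 0" by (simp only: add_cancel_right_right)
    then show ?thesis using \<open>s = i\<close> by simp
  next
    case False
    then show ?thesis using \<open>s = i\<close> by simp
  qed
next
  case False
  show ?thesis
  proof (cases "t' = i")
    case True
    with False B have "0 = u i + u s" by simp
    then have "u i = - u s" by (simp add: eq_neg_iff_add_eq_0 add.commute)
    then show ?thesis using False True by simp
  next
    case False2: False
    with False A[OF i] show ?thesis by simp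
  qed
qed

definition x0 :: "((path \<Rightarrow> 'k::field) \<Rightarrow> path \<Rightarrow> 'k) \<Rightarrow> path \<Rightarrow> 'k" where
  "x0 dd = (\<lambda>r. if r \<in> G then dd (bp (Triv (psrc r))) r else 0)"

lemma S1:
  fixes dd :: "(path \<Rightarrow> 'k::field) \<Rightarrow> path \<Rightarrow> 'k"
  assumes dd: "fder dd" and i: "i \<in> {1,2,3}"
  shows "dd (bp (Triv i)) = ad (x0 dd) (bp (Triv i))"
proof (rule ext)
  fix r
  let ?u = "\<lambda>j. dd (bp (Triv j)) r"
  show "dd (bp (Triv i)) r = ad (x0 dd) (bp (Triv i)) r"
  proof (cases "r \<in> G")
    case False
    have "supG (dd (bp (Triv i)))" using i by (intro fder_supG[OF dd] supG_bp Triv_G)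
    then show ?thesis using False by (simp add: supG_def ad_def cm_def tm_notG)
  next
    case True
    have rel: "(if j = j' then ?u j else 0) = (if psrc r = j' then ?u j else 0) + (if ptgt r = j then ?u j' else 0)"
      if j: "j \<in> {1,2,3}" and j': "j' \<in> {1,2,3}" for j j'
    proof -
      have Gj: "Triv j \<in> G" "Triv j' \<in> G" using j j' by (auto intro: Triv_G)
      have "dd (cm (bp (Triv j)) (bp (Triv j'))) = cm (dd (bp (Triv j))) (bp (Triv j')) + cm (bp (Triv j)) (dd (bp (Triv j')))"
        using Gj by (simp add: fder_leib[OF dd])
      moreover have "cm (bp (Triv j)) (bp (Triv j')) = (if j = j' then bp (Triv j) else (0 :: path \<Rightarrow> 'k))"
        using Gj by (auto simp: cm_bpbp tm_bp tm_None)
      ultimately have H: "dd (if j = j' then bp (Triv j) else 0) r = cm (dd (bp (Triv j))) (bp (Triv j')) r + cm (bp (Triv j)) (dd (bp (Triv j'))) r"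
        by simp
      have L: "(if j = j' then ?u j else 0) = dd (if j = j' then bp (Triv j) else 0) r"
        by (cases "j = j'") (simp_all add: fder_zero[OF dd])
      show ?thesis unfolding L H cmRe[OF Gj(2) True] cmLe[OF Gj(1) True] by (rule refl)
    qed
    have s: "psrc r \<in> {1,2,3}" and t: "ptgt r \<in> {1,2,3}" using True G_src G_tgt by auto
    have A: "?u j = (if psrc r = j then ?u j else 0) + (if ptgt r = j then ?u j else 0)" if "j \<in> {1,2,3}" for j
      using rel[OF that that] by simp
    have B: "0 = ?u (ptgt r) + ?u (psrc r)" if "psrc r \<noteq> ptgt r"
      using rel[OF t s] that by simp
    have "?u i = (if psrc r = i then ?u (psrc r) else 0) - (if ptgt r = i then ?u (psrc r) else 0)"
      by (rule idem_arith[OF A B i s t])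
    moreover have "ad (x0 dd) (bp (Triv i)) r = (if psrc r = i then ?u (psrc r) else 0) - (if ptgt r = i then ?u (psrc r) else 0)"
      using True i by (simp add: ad_def cmRe cmLe Triv_G x0_def)
    ultimately show ?thesis by simp
  qed
qed

lemma diff_lem: "(a :: 'a::ab_group_add) = x + b \<Longrightarrow> c = x' + e \<Longrightarrow> x = x' \<Longrightarrow> a - c = b - e"
  by simp
lemma diff_lem2: "(a :: 'a::ab_group_add) = b + x \<Longrightarrow> c = e + x' \<Longrightarrow> x = x' \<Longrightarrow> a - c = b - e"
  by simp

lemma corner:
  fixes dd :: "(path \<Rightarrow> 'k::field) \<Rightarrow> path \<Rightarrow> 'k"
  assumes dd: "fder dd" and v: "v \<in> G" and r: "(dd (bp v) - ad (x0 dd) (bp v)) r \<noteq> 0"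
  shows "r \<in> G \<and> ptgt r = ptgt v \<and> psrc r = psrc v"
proof -
  let ?h = "dd (bp v) - ad (x0 dd) (bp v)"
  have sup: "supG ?h" using dd v by (simp add: fder_supG)
  then have rG: "r \<in> G" using r by (auto simp: supG_def)
  have tv: "ptgt v \<in> {1,2,3}" and sv: "psrc v \<in> {1,2,3}" using v G_src G_tgt by auto
  have Gt: "Triv (ptgt v) \<in> G" and Gs: "Triv (psrc v) \<in> G" using tv sv by (auto intro: Triv_G)
  have e1: "(bp v :: path \<Rightarrow> 'k) = cm (bp (Triv (ptgt v))) (bp v)"
    by (rule bp_prod[OF Gt v _ v]) (simp add: pmul_Tl)
  have e2: "(bp v :: path \<Rightarrow> 'k) = cm (bp v) (bp (Triv (psrc v)))"
    by (rule bp_prod[OF v Gs _ v]) (simp add: pmul_Tr)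
  have H1: "?h = cm (bp (Triv (ptgt v))) ?h"
  proof -
    have h1: "dd (bp v) = cm (dd (bp (Triv (ptgt v)))) (bp v) + cm (bp (Triv (ptgt v))) (dd (bp v))"
      using fder_leib[OF dd, of "bp (Triv (ptgt v))" "bp v"] Gt v by (simp only: e1[symmetric] supG_bp simp_thms)
    have h2: "ad (x0 dd) (bp v) = cm (ad (x0 dd) (bp (Triv (ptgt v)))) (bp v) + cm (bp (Triv (ptgt v))) (ad (x0 dd) (bp v))"
      using ad_leib[OF Gt v, of "x0 dd"] by (simp only: e1[symmetric])
    have h3: "dd (bp (Triv (ptgt v))) = ad (x0 dd) (bp (Triv (ptgt v)))" using S1[OF dd tv] .
    have "?h = cm (bp (Triv (ptgt v))) (dd (bp v)) - cm (bp (Triv (ptgt v))) (ad (x0 dd) (bp v))"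
      by (rule diff_lem[OF h1 h2]) (simp only: h3)
    then show ?thesis by (subst cm_diffR)
  qed
  have H2: "?h = cm ?h (bp (Triv (psrc v)))"
  proof -
    have h1: "dd (bp v) = cm (dd (bp v)) (bp (Triv (psrc v))) + cm (bp v) (dd (bp (Triv (psrc v))))"
      using fder_leib[OF dd, of "bp v" "bp (Triv (psrc v))"] Gs v by (simp only: e2[symmetric] supG_bp simp_thms)
    have h2: "ad (x0 dd) (bp v) = cm (ad (x0 dd) (bp v)) (bp (Triv (psrc v))) + cm (bp v) (ad (x0 dd) (bp (Triv (psrc v))))"
      using ad_leib[OF v Gs, of "x0 dd"] by (simp only: e2[symmetric])
    have h3: "dd (bp (Triv (psrc v))) = ad (x0 dd) (bp (Triv (psrc v)))" using S1[OF dd sv] .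
    have "?h = cm (dd (bp v)) (bp (Triv (psrc v))) - cm (ad (x0 dd) (bp v)) (bp (Triv (psrc v)))"
      by (rule diff_lem2[OF h1 h2]) (simp only: h3)
    then show ?thesis by (subst cm_diffL)
  qed
  have F1: "?h r = (if ptgt r = ptgt v then ?h r else 0)"
    using cmLe[OF Gt rG, of ?h] H1[symmetric] by simp
  have F2: "?h r = (if psrc r = psrc v then ?h r else 0)"
    using cmRe[OF Gs rG, of ?h] H2[symmetric] by simp
  have "ptgt r = ptgt v"
  proof (rule ccontr)
    assume ne: "ptgt r \<noteq> ptgt v"
    have "?h r = 0" using ne by (subst F1) simp
    then show False using r by simp
  qed
  moreover have "psrc r = psrc v"
  proof (rule ccontr)
    assume ne: "psrc r \<noteq> psrc v"
    have "?h r = 0" using ne by (subst F2) simp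
    then show False using r by simp
  qed
  ultimately show ?thesis using rG by simp
qed

end



context HH begin

lemma GB[simp]: "P False 1 False \<in> G" using n2 by (simp add: goodP_def)
lemma GA[simp]: "P True 0 False \<in> G" using n2 n'1 by (simp add: goodP_def)
lemma GC[simp]: "P False 0 True \<in> G" using n2 n''1 by (simp add: goodP_def)
lemma goodP_gens[simp]: "goodP False 1 False" "goodP False (Suc 0) False" "goodP True 0 False" "goodP False 0 True"
  using n2 n'1 n''1 by (simp_all add: goodP_def)

lemma adB_loop: "P False k False \<in> G \<Longrightarrow> ad x (bp (P False 1 False)) (P False k False) = 0"
  by (simp add: ad_def cmRG cmLG)

lemma adAC: "1 \<le> k \<Longrightarrow> P True k False \<in> G \<Longrightarrow> P False k True \<in> G \<Longrightarrow>
  ad x (bp (P True 0 False)) (P True k False) + ad x (bp (P False 0 True)) (P False k True) = 0"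
  by (simp add: ad_def cmRA cmLG cmRG cmLC)

lemma leib_at:
  fixes dd :: "(path \<Rightarrow> 'k::field) \<Rightarrow> path \<Rightarrow> 'k"
  assumes dd: "fder dd" and u: "u \<in> G" and v: "v \<in> G" and w: "pmul u v = Some w" "w \<in> G"
  shows "dd (bp w) r = cm (dd (bp u)) (bp v) r + cm (bp u) (dd (bp v)) r"
proof -
  have "(bp w :: path \<Rightarrow> 'k) = cm (bp u) (bp v)" using u v w by (rule bp_prod)
  then have "dd (bp w) = cm (dd (bp u)) (bp v) + cm (bp u) (dd (bp v))"
    using u v by (simp add: fder_leib[OF dd])
  then show ?thesis by simp
qed

lemma leib_zero:
  fixes dd :: "(path \<Rightarrow> 'k::field) \<Rightarrow> path \<Rightarrow> 'k"
  assumes dd: "fder dd" and u: "u \<in> G" and v: "v \<in> G" and w: "pmul u v = Some w" "w \<notin> G"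
  shows "cm (dd (bp u)) (bp v) r + cm (bp u) (dd (bp v)) r = 0"
proof -
  have "cm (bp u) (bp v) = (0 :: path \<Rightarrow> 'k)" using u v w by (simp add: cm_bpbp tm_zero)
  then have "0 = cm (dd (bp u)) (bp v) + cm (bp u) (dd (bp v))"
    using u v fder_leib[OF dd, of "bp u" "bp v"] fder_zero[OF dd] by simp
  then show ?thesis by (metis zero_fun_apply plus_fun_apply)
qed

lemma b_chains:
  fixes dd :: "(path \<Rightarrow> 'k::field) \<Rightarrow> path \<Rightarrow> 'k"
  assumes dd: "fder dd"
  defines "b0 \<equiv> dd (bp (P False 1 False)) (P False 0 False)"
  shows "Suc k < n \<Longrightarrow> dd (bp (P False (Suc k) False)) (P False k False) = of_nat (Suc k) * b0"
proof (induction k)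
  case 0
  then show ?case by (simp add: b0_def)
next
  case (Suc k)
  have m: "pmul (P False 1 False) (P False (Suc k) False) = Some (P False (Suc (Suc k)) False)" by simp
  have G1: "P False (Suc k) False \<in> G" "P False (Suc (Suc k)) False \<in> G" using Suc.prems by (auto simp: goodP_def)
  have "dd (bp (P False (Suc (Suc k)) False)) (P False (Suc k) False) =
     cm (dd (bp (P False 1 False))) (bp (P False (Suc k) False)) (P False (Suc k) False)
     + cm (bp (P False 1 False)) (dd (bp (P False (Suc k) False))) (P False (Suc k) False)"
    by (rule leib_at[OF dd GB G1(1) m G1(2)])
  also have "\<dots> = b0 + dd (bp (P False (Suc k) False)) (P False k False)"
    using G1 by (simp add: cmRG cmLG b0_def)
  also have "\<dots> = of_nat (Suc (Suc k)) * b0" using Suc by (simp add: algebra_simps)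
  finally show ?case .
qed

lemma a_chain:
  fixes dd :: "(path \<Rightarrow> 'k::field) \<Rightarrow> path \<Rightarrow> 'k"
  assumes dd: "fder dd" and k: "Suc k < n'"
  shows "dd (bp (P True (Suc k) False)) (P True k False) = of_nat (Suc k) * dd (bp (P False 1 False)) (P False 0 False)"
proof -
  have m: "pmul (P True 0 False) (P False (Suc k) False) = Some (P True (Suc k) False)" by simp
  have G1: "P False (Suc k) False \<in> G" "P True (Suc k) False \<in> G" "P True k False \<in> G"
    using k n'n by (auto simp: goodP_def)
  have "dd (bp (P True (Suc k) False)) (P True k False) =
     cm (dd (bp (P True 0 False))) (bp (P False (Suc k) False)) (P True k False)
     + cm (bp (P True 0 False)) (dd (bp (P False (Suc k) False))) (P True k False)"
    by (rule leib_at[OF dd GA G1(1) m G1(2)])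
  also have "\<dots> = dd (bp (P False (Suc k) False)) (P False k False)"
    using G1 by (simp add: cmRG cmLG)
  also have "\<dots> = of_nat (Suc k) * dd (bp (P False 1 False)) (P False 0 False)"
    using b_chains[OF dd, of k] k n'n by simp
  finally show ?thesis .
qed

lemma g_chain:
  fixes dd :: "(path \<Rightarrow> 'k::field) \<Rightarrow> path \<Rightarrow> 'k"
  assumes dd: "fder dd" and k: "Suc k < n''"
  shows "dd (bp (P False (Suc k) True)) (P False k True) = of_nat (Suc k) * dd (bp (P False 1 False)) (P False 0 False)"
proof -
  have m: "pmul (P False (Suc k) False) (P False 0 True) = Some (P False (Suc k) True)" by simp
  have G1: "P False (Suc k) False \<in> G" "P False (Suc k) True \<in> G" "P False k True \<in> G"
    using k n''n by (auto simp: goodP_def)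
  have "dd (bp (P False (Suc k) True)) (P False k True) =
     cm (dd (bp (P False (Suc k) False))) (bp (P False 0 True)) (P False k True)
     + cm (bp (P False (Suc k) False)) (dd (bp (P False 0 True))) (P False k True)"
    by (rule leib_at[OF dd G1(1) GC m G1(2)])
  also have "\<dots> = dd (bp (P False (Suc k) False)) (P False k False)"
    using G1 by (simp add: cmRG cmLG)
  also have "\<dots> = of_nat (Suc k) * dd (bp (P False 1 False)) (P False 0 False)"
    using b_chains[OF dd, of k] k n''n by simp
  finally show ?thesis .
qed

lemma b0_rels:
  fixes dd :: "(path \<Rightarrow> 'k::field) \<Rightarrow> path \<Rightarrow> 'k"
  assumes dd: "fder dd"
  defines "b0 \<equiv> dd (bp (P False 1 False)) (P False 0 False)"
  shows "of_nat n * b0 = 0" "of_nat n' * b0 = 0" "of_nat n'' * b0 = 0"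
proof -
  obtain K where K: "n = Suc (Suc K)" using n2 by (metis add_2_eq_Suc le_Suc_ex)
  have KK: "Suc K < n" "\<not> Suc (Suc K) < n" using K by simp_all
  have G1: "P False (Suc K) False \<in> G" using KK by (simp add: goodP_def)
  have NG: "P False (Suc (Suc K)) False \<notin> G" using KK by (simp add: goodP_def)
  have m: "pmul (P False 1 False) (P False (Suc K) False) = Some (P False (Suc (Suc K)) False)" by simp
  have "0 = cm (dd (bp (P False 1 False))) (bp (P False (Suc K) False)) (P False (Suc K) False)
     + cm (bp (P False 1 False)) (dd (bp (P False (Suc K) False))) (P False (Suc K) False)"
    using leib_zero[OF dd GB G1 m NG] by simp
  also have "\<dots> = b0 + dd (bp (P False (Suc K) False)) (P False K False)"
    using G1 by (simp add: cmRG cmLG b0_def)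
  also have "\<dots> = b0 + of_nat (Suc K) * b0"
  proof -
    have bc: "dd (bp (P False (Suc K) False)) (P False K False) = of_nat (Suc K) * b0"
      using b_chains[OF dd KK(1)] unfolding b0_def .
    show ?thesis by (simp only: bc)
  qed
  finally have "of_nat (Suc (Suc K)) * b0 = 0" by (simp add: algebra_simps)
  then show "of_nat n * b0 = 0" by (simp only: K)
next
  obtain K where K: "n' = Suc K" using n'1 not0_implies_Suc by fastforce
  have KK: "K < n'" "K < n" "\<not> Suc K < n'" using K n'n by simp_all
  have G1: "P True K False \<in> G" using KK by (simp add: goodP_def)
  have NG: "P True (Suc K) False \<notin> G" using KK by (simp add: goodP_def)
  have m: "pmul (P True K False) (P False 1 False) = Some (P True (Suc K) False)" by simp
  have first: "cm (dd (bp (P True K False))) (bp (P False 1 False)) (P True K False) = of_nat K * b0"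
  proof (cases K)
    case 0
    then show ?thesis using G1 by (simp add: cmRG)
  next
    case (Suc K')
    then show ?thesis using G1 a_chain[OF dd, of K'] KK by (simp add: cmRG b0_def)
  qed
  have "0 = cm (dd (bp (P True K False))) (bp (P False 1 False)) (P True K False)
     + cm (bp (P True K False)) (dd (bp (P False 1 False))) (P True K False)"
    using leib_zero[OF dd G1 GB m NG] by simp
  also have "\<dots> = of_nat K * b0 + b0"
    using G1 first by (simp add: cmLG b0_def)
  finally have "of_nat (Suc K) * b0 = 0" by (simp add: algebra_simps)
  then show "of_nat n' * b0 = 0" by (simp only: K)
next
  obtain K where K: "n'' = Suc K" using n''1 not0_implies_Suc by fastforce
  have KK: "K < n''" "K < n" "\<not> Suc K < n''" using K n''n by simp_all
  have G1: "P False K True \<in> G" using KK by (simp add: goodP_def)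
  have NG: "P False (Suc K) True \<notin> G" using KK by (simp add: goodP_def)
  have m: "pmul (P False 1 False) (P False K True) = Some (P False (Suc K) True)" by simp
  have second: "cm (bp (P False 1 False)) (dd (bp (P False K True))) (P False K True) = of_nat K * b0"
  proof (cases K)
    case 0
    then show ?thesis using G1 by (simp add: cmLG)
  next
    case (Suc K')
    then show ?thesis using G1 g_chain[OF dd, of K'] KK by (simp add: cmLG b0_def)
  qed
  have "0 = cm (dd (bp (P False 1 False))) (bp (P False K True)) (P False K True)
     + cm (bp (P False 1 False)) (dd (bp (P False K True))) (P False K True)"
    using leib_zero[OF dd GB G1 m NG] by simp
  also have "\<dots> = b0 + of_nat K * b0"
    using G1 second by (simp add: cmRG b0_def)
  finally have "of_nat (Suc K) * b0 = 0" by (simp add: algebra_simps)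
  then show "of_nat n'' * b0 = 0" by (simp only: K)
qed

lemma b0_zero:
  fixes dd :: "(path \<Rightarrow> 'k::field) \<Rightarrow> path \<Rightarrow> 'k"
  assumes dd: "fder dd" and nc: "of_nat (gcd n (gcd n' n'')) \<noteq> (0::'k)"
  shows "dd (bp (P False 1 False)) (P False 0 False) = 0"
proof (rule ccontr)
  let ?b = "dd (bp (P False 1 False)) (P False 0 False)"
  assume b: "?b \<noteq> 0"
  have "of_nat n = (0::'k)" "of_nat n' = (0::'k)" "of_nat n'' = (0::'k)" using b0_rels[OF dd] b by auto
  then have "CHAR('k) dvd n" "CHAR('k) dvd n'" "CHAR('k) dvd n''" by (simp_all add: of_nat_eq_0_iff_char_dvd)
  then have "CHAR('k) dvd gcd n (gcd n' n'')" by simp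
  then have "of_nat (gcd n (gcd n' n'')) = (0::'k)" by (simp add: of_nat_eq_0_iff_char_dvd)
  with nc show False by simp
qed

end



context HH begin

definition phiF :: "((path \<Rightarrow> 'k::field) \<Rightarrow> path \<Rightarrow> 'k) \<Rightarrow> nat \<Rightarrow> 'k" where
  "phiF dd i = (if i < n - 1 then dd (bp (P False 1 False)) (P False (Suc i) False)
     else if i < n - 1 + (m - 1) then dd (bp (P True 0 False)) (P True (Suc (i - (n - 1))) False)
                                 + dd (bp (P False 0 True)) (P False (Suc (i - (n - 1))) True)
     else if i = n - 1 + (m - 1) \<and> of_nat (gcd n (gcd n' n'')) = (0::'k) then dd (bp (P False 1 False)) (P False 0 False)
     else 0)"

lemma supG_x0[simp]: "supG (x0 dd)" by (simp add: supG_def x0_def)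

lemma y_facts:
  fixes a g :: "nat \<Rightarrow> 'k::field"
  assumes y_def: "y = (\<lambda>r. if r = Triv 1 then a 0 else if r = Triv 3 then - g 0
      else if r \<in> G \<and> \<not> pa r \<and> \<not> pg r \<and> 1 \<le> pk r then (if pk r < n' then - a (pk r) else g (pk r)) else 0)"
  shows "supG y" "y (Triv 1) = a 0" "y (Triv 3) = - g 0"
    "y (P True k gg) = 0" "y (P aa k True) = 0"
    "y (P False k False) = (if 1 \<le> k \<and> k < n then (if k < n' then - a k else g k) else 0)"
    "y (Triv (Suc 0)) = a 0"
proof -
  show "y (Triv (Suc 0)) = a 0" by (simp add: y_def)
  show "supG y" by (auto simp: supG_def y_def)
  show "y (Triv 1) = a 0" by (simp add: y_def)
  show "y (Triv 3) = - g 0" by (simp add: y_def)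
  show "y (P True k gg) = 0" by (simp add: y_def)
  show "y (P aa k True) = 0" by (simp add: y_def)
  show "y (P False k False) = (if 1 \<le> k \<and> k < n then (if k < n' then - a k else g k) else 0)"
    by (auto simp: y_def goodP_def)
qed

lemma upper_core:
  fixes dd :: "(path \<Rightarrow> 'k::field) \<Rightarrow> path \<Rightarrow> 'k"
  assumes dd: "fder dd" and phi: "\<And>i. phiF dd i = 0"
  shows "\<exists>x. supG x \<and> (\<forall>f. supG f \<longrightarrow> dd f = ad x f)"
proof -
  let ?bA = "bp (P True 0 False) :: path \<Rightarrow> 'k"
  let ?bB = "bp (P False 1 False) :: path \<Rightarrow> 'k"
  let ?bC = "bp (P False 0 True) :: path \<Rightarrow> 'k"
  define X0 where "X0 = x0 dd"
  have PB: "dd ?bB (P False k False) = 0" if "1 \<le> k" "k < n" for k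
  proof -
    have i1: "k - 1 < n - 1" and i2: "Suc (k - 1) = k" using that by auto
    show ?thesis using phi[of "k - 1"] unfolding phiF_def if_P[OF i1] i2 .
  qed
  have PS: "dd ?bA (P True k False) + dd ?bC (P False k True) = 0" if "1 \<le> k" "k < m" for k
  proof -
    have i1: "\<not> n - 1 + (k - 1) < n - 1" and i2: "n - 1 + (k - 1) < n - 1 + (m - 1)"
      and i3: "Suc (n - 1 + (k - 1) - (n - 1)) = k" using that by auto
    show ?thesis using phi[of "n - 1 + (k - 1)"] unfolding phiF_def if_not_P[OF i1] if_P[OF i2] i3 .
  qed
  have P0: "dd ?bB (P False 0 False) = 0"
  proof (cases "of_nat (gcd n (gcd n' n'')) = (0::'k)")
    case True
    have i1: "\<not> n - 1 + (m - 1) < n - 1" and i2: "\<not> n - 1 + (m - 1) < n - 1 + (m - 1)" by auto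
    show ?thesis using phi[of "n - 1 + (m - 1)"] True unfolding phiF_def if_not_P[OF i1] if_not_P[OF i2] by simp
  next
    case False
    then show ?thesis by (rule b0_zero[OF dd])
  qed
  define hA where "hA = dd ?bA - ad X0 ?bA"
  define hB where "hB = dd ?bB - ad X0 ?bB"
  define hC where "hC = dd ?bC - ad X0 ?bC"
  have cA: "r \<in> G \<and> ptgt r = 1 \<and> psrc r = 2" if "hA r \<noteq> 0" for r
    using corner[OF dd GA, of r] that by (simp add: hA_def X0_def)
  have cB: "r \<in> G \<and> ptgt r = 2 \<and> psrc r = 2" if "hB r \<noteq> 0" for r
    using corner[OF dd GB, of r] that by (simp add: hB_def X0_def)
  have cC: "r \<in> G \<and> ptgt r = 2 \<and> psrc r = 3" if "hC r \<noteq> 0" for r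
    using corner[OF dd GC, of r] that by (simp add: hC_def X0_def)
  have hB0: "hB = 0"
  proof
    fix r
    show "hB r = 0 r"
    proof (rule ccontr)
      assume ne: "hB r \<noteq> 0 r"
      then have "r \<in> G \<and> ptgt r = 2 \<and> psrc r = 2" using cB by simp
      then obtain k where r: "r = P False k False" and k: "k < n"
        by (auto elim!: G_cases simp: goodP_def split: if_splits)
      have "P False k False \<in> G" using k by (simp add: goodP_def)
      then have "hB r = dd ?bB (P False k False)" using r adB_loop[of k X0] by (simp add: hB_def)
      also have "\<dots> = 0" using P0 PB k by (cases "k = 0") auto
      finally show False using ne by simp
    qed
  qed
  define a where "a = (\<lambda>k. hA (P True k False))"
  define g where "g = (\<lambda>k. hC (P False k True))"
  have ag: "a k + g k = 0" if "1 \<le> k" "k < m" for k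
  proof -
    have G1: "P True k False \<in> G" "P False k True \<in> G" using that n'n n''n by (auto simp: goodP_def m_def)
    have "a k + g k = (dd ?bA (P True k False) + dd ?bC (P False k True))
         - (ad X0 ?bA (P True k False) + ad X0 ?bC (P False k True))"
      by (simp add: a_def g_def hA_def hC_def)
    also have "\<dots> = 0" using PS[OF that] adAC[OF that(1) G1, of X0] by (simp only: diff_self)
    finally show ?thesis .
  qed
  define y where "y = (\<lambda>r. if r = Triv 1 then a 0 else if r = Triv 3 then - g 0
      else if r \<in> G \<and> \<not> pa r \<and> \<not> pg r \<and> 1 \<le> pk r then (if pk r < n' then - a (pk r) else g (pk r)) else 0)"
  note yf = y_facts[OF y_def]
  have supy: "supG y" by (rule yf(1))
  have CE: "ad y (bp (Triv i)) = 0" if i: "i \<in> {1,2,3}" for i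
  proof
    fix r
    show "ad y (bp (Triv i)) r = 0 r"
    proof (cases "r \<in> G")
      case False
      then show ?thesis using supG_ad[of y "bp (Triv i)"] by (simp add: supG_def)
    next
      case True
      have "ad y (bp (Triv i)) r = (if psrc r = i then y r else 0) - (if ptgt r = i then y r else 0)"
        using True i by (simp add: ad_def cmRe cmLe Triv_G)
      also have "\<dots> = 0"
        using True by (elim G_cases) (auto simp: yf)
      finally show ?thesis by simp
    qed
  qed
  have CB: "ad y ?bB = 0"
  proof
    fix r
    show "ad y ?bB r = 0 r"
    proof (cases "r \<in> G")
      case False
      then show ?thesis using supG_ad[of y ?bB] by (simp add: supG_def)
    next
      case True
      then show ?thesis
      proof (cases rule: G_cases)
        case T1 then show ?thesis by (simp add: ad_def cmRG_T cmLG_T)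
      next
        case T3 then show ?thesis by (simp add: ad_def cmRG_T cmLG_T)
      next
        case (PP aa k gg)
        then show ?thesis by (cases aa; cases gg) (simp_all add: ad_def cmRG cmLG yf)
      qed
    qed
  qed
  have CA: "ad y ?bA = hA"
  proof
    fix r
    show "ad y ?bA r = hA r"
    proof (cases "r \<in> G")
      case False
      then have "hA r = 0" using cA by blast
      then show ?thesis using False supG_ad[of y ?bA] by (simp add: supG_def)
    next
      case True
      show ?thesis
      proof (cases "\<exists>k. r = P True k False")
        case True2: True
        then obtain k where r: "r = P True k False" by blast
        have gk: "goodP True k False" using True r by simp
        have "ad y ?bA r = (if k = 0 then y (Triv 1) else 0) - y (P False k False)"
          using r gk by (simp add: ad_def cmRA cmLG)
        also have "\<dots> = a k" using gk n'n by (cases "k = 0") (auto simp: yf goodP_def)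
        finally show ?thesis by (simp add: a_def r)
      next
        case False
        then have "hA r = 0" using cA by (force elim!: G_cases split: if_splits)
        moreover have "ad y ?bA r = 0"
          using True False by (elim G_cases) (auto simp: ad_def cmRA cmLG_T cmLG yf)
        ultimately show ?thesis by simp
      qed
    qed
  qed
  have CC: "ad y ?bC = hC"
  proof
    fix r
    show "ad y ?bC r = hC r"
    proof (cases "r \<in> G")
      case False
      then have "hC r = 0" using cC by blast
      then show ?thesis using False supG_ad[of y ?bC] by (simp add: supG_def)
    next
      case True
      show ?thesis
      proof (cases "\<exists>k. r = P False k True")
        case True2: True
        then obtain k where r: "r = P False k True" by blast
        have gk: "goodP False k True" using True r by simp
        have "ad y ?bC r = y (P False k False) - (if k = 0 then y (Triv 3) else 0)"
          using r gk by (simp add: ad_def cmRG cmLC)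
        also have "\<dots> = g k"
        proof (cases "k = 0")
          case True
          then show ?thesis by (simp add: yf)
        next
          case False
          have kn: "k < n''" "k < n" using gk n''n by (auto simp: goodP_def)
          show ?thesis
          proof (cases "k < n'")
            case True
            have "a k + g k = 0" using ag[of k] False True kn by (simp add: m_def)
            then have "- a k = g k" by (simp add: add_eq_0_iff2 eq_commute[of "- a k"] minus_unique)
            then show ?thesis using False True kn by (simp add: yf)
          next
            case False2: False
            then show ?thesis using False kn by (simp add: yf)
          qed
        qed
        finally show ?thesis by (simp add: g_def r)
      next
        case False
        then have "hC r = 0" using cC by (force elim!: G_cases split: if_splits)
        moreover have "ad y ?bC r = 0"
          using True False by (elim G_cases) (auto simp: ad_def cmRG_T cmRG cmLC yf)
        ultimately show ?thesis by simp
      qed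
    qed
  qed
  define x where "x = X0 + y"
  have gen: "dd (bp p) = ad x (bp p)" if p: "p \<in> G" for p
  proof (rule gen_principle[OF dd _ _ _ _ _ _ p])
    show "dd (bp (Triv 1)) = ad x (bp (Triv 1))"
      using S1[OF dd, of 1] CE[of 1] by (simp add: x_def ad_addx X0_def)
    show "dd (bp (Triv 2)) = ad x (bp (Triv 2))"
      using S1[OF dd, of 2] CE[of 2] by (simp add: x_def ad_addx X0_def)
    show "dd (bp (Triv 3)) = ad x (bp (Triv 3))"
      using S1[OF dd, of 3] CE[of 3] by (simp add: x_def ad_addx X0_def)
    show "dd ?bA = ad x ?bA"
      using CA by (simp add: x_def ad_addx hA_def)
    show "dd ?bB = ad x ?bB"
      using CB hB0 by (simp add: x_def ad_addx hB_def)
    show "dd ?bC = ad x ?bC"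
      using CC by (simp add: x_def ad_addx hC_def)
  qed
  have "supG x" using supy by (simp add: x_def X0_def)
  moreover have "\<forall>f. supG f \<longrightarrow> dd f = ad x f"
    using gen by (auto intro: der_eq_ad[OF dd])
  ultimately show ?thesis by blast
qed

end



context HH begin

definition lin :: "(path \<Rightarrow> path \<Rightarrow> 'k::field) \<Rightarrow> (path \<Rightarrow> 'k) \<Rightarrow> path \<Rightarrow> 'k" where
  "lin K f = (\<lambda>r. \<Sum>p\<in>G. f p * K p r)"

lemma swap3: "(\<Sum>w\<in>A. \<Sum>u\<in>B. \<Sum>v\<in>C. X w u v) = (\<Sum>u\<in>B. \<Sum>v\<in>C. \<Sum>w\<in>A. (X w u v :: 'a::comm_monoid_add))"
  by (subst sum.swap) (rule sum.cong[OF refl], rule sum.swap)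

lemma lin_leib0:
  fixes K :: "path \<Rightarrow> path \<Rightarrow> 'k::field"
  assumes KG: "\<And>p r. r \<notin> G \<Longrightarrow> K p r = 0"
    and B: "\<And>u v r. u \<in> G \<Longrightarrow> v \<in> G \<Longrightarrow> r \<in> G \<Longrightarrow>
      (\<Sum>w\<in>G. tm u v w * K w r) = (\<Sum>p\<in>G. K u p * tm p v r) + (\<Sum>q\<in>G. K v q * tm u q r)"
  shows "lin K (cm f g) r = cm (lin K f) g r + cm f (lin K g) r"
proof (cases "r \<in> G")
  case False
  then show ?thesis by (simp add: lin_def KG cm_def tm_notG)
next
  case True
  have L: "lin K (cm f g) r = (\<Sum>u\<in>G. \<Sum>v\<in>G. f u * g v * (\<Sum>w\<in>G. tm u v w * K w r))"
  proof -
    have "lin K (cm f g) r = (\<Sum>w\<in>G. \<Sum>u\<in>G. \<Sum>v\<in>G. f u * g v * (tm u v w * K w r))"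
      by (simp add: lin_def cm_def sum_distrib_right mult.assoc)
    also have "\<dots> = (\<Sum>u\<in>G. \<Sum>v\<in>G. \<Sum>w\<in>G. f u * g v * (tm u v w * K w r))" by (rule swap3)
    also have "\<dots> = (\<Sum>u\<in>G. \<Sum>v\<in>G. f u * g v * (\<Sum>w\<in>G. tm u v w * K w r))"
      by (simp add: sum_distrib_left)
    finally show ?thesis .
  qed
  have R1: "cm (lin K f) g r = (\<Sum>u\<in>G. \<Sum>v\<in>G. f u * g v * (\<Sum>p\<in>G. K u p * tm p v r))"
  proof -
    have "cm (lin K f) g r = (\<Sum>p\<in>G. \<Sum>v\<in>G. \<Sum>u\<in>G. f u * g v * (K u p * tm p v r))"
      by (simp add: lin_def cm_def sum_distrib_right sum_distrib_left mult_ac)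
    also have "\<dots> = (\<Sum>p\<in>G. \<Sum>u\<in>G. \<Sum>v\<in>G. f u * g v * (K u p * tm p v r))"
      by (rule sum.cong[OF refl], rule sum.swap)
    also have "\<dots> = (\<Sum>u\<in>G. \<Sum>v\<in>G. \<Sum>p\<in>G. f u * g v * (K u p * tm p v r))" by (rule swap3)
    also have "\<dots> = (\<Sum>u\<in>G. \<Sum>v\<in>G. f u * g v * (\<Sum>p\<in>G. K u p * tm p v r))"
      by (simp add: sum_distrib_left)
    finally show ?thesis .
  qed
  have R2: "cm f (lin K g) r = (\<Sum>u\<in>G. \<Sum>v\<in>G. f u * g v * (\<Sum>q\<in>G. K v q * tm u q r))"
  proof -
    have "cm f (lin K g) r = (\<Sum>u\<in>G. \<Sum>q\<in>G. \<Sum>v\<in>G. f u * g v * (K v q * tm u q r))"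
      by (simp add: lin_def cm_def sum_distrib_right sum_distrib_left mult_ac)
    also have "\<dots> = (\<Sum>u\<in>G. \<Sum>v\<in>G. \<Sum>q\<in>G. f u * g v * (K v q * tm u q r))"
      by (rule sum.cong[OF refl], rule sum.swap)
    also have "\<dots> = (\<Sum>u\<in>G. \<Sum>v\<in>G. f u * g v * (\<Sum>q\<in>G. K v q * tm u q r))"
      by (simp add: sum_distrib_left)
    finally show ?thesis .
  qed
  show ?thesis unfolding L R1 R2
    by (simp add: B True distrib_left sum.distrib)
qed

lemma lin_fder:
  fixes K :: "path \<Rightarrow> path \<Rightarrow> 'k::field"
  assumes KG: "\<And>p r. r \<notin> G \<Longrightarrow> K p r = 0"
    and B: "\<And>u v r. u \<in> G \<Longrightarrow> v \<in> G \<Longrightarrow> r \<in> G \<Longrightarrow>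
      (\<Sum>w\<in>G. tm u v w * K w r) = (\<Sum>p\<in>G. K u p * tm p v r) + (\<Sum>q\<in>G. K v q * tm u q r)"
  shows "fder (lin K)"
  unfolding fder_def
proof (intro conjI allI impI)
  fix f :: "path \<Rightarrow> 'k" show "supG (lin K f)" by (simp add: supG_def lin_def KG)
next
  fix f g :: "path \<Rightarrow> 'k" show "lin K (f + g) = lin K f + lin K g"
    by (simp add: lin_def fun_eq_iff distrib_right sum.distrib)
next
  fix c and f :: "path \<Rightarrow> 'k" show "lin K (sm c f) = sm c (lin K f)"
    by (simp add: lin_def fun_eq_iff sm_def sum_distrib_left mult.assoc)
next
  fix f g :: "path \<Rightarrow> 'k" show "lin K (cm f g) = cm (lin K f) g + cm f (lin K g)"
    using lin_leib0[OF KG B] by (simp add: fun_eq_iff)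
qed

lemma lin_bp: "q \<in> G \<Longrightarrow> lin K (bp q) r = K q r"
proof -
  assume q: "q \<in> G"
  have "lin K (bp q) r = (\<Sum>p\<in>G. if p = q then K q r else 0)"
    unfolding lin_def by (intro sum.cong) (auto simp: bp_def)
  then show ?thesis using q by simp
qed

end



context HH begin

definition Kw :: "(path \<Rightarrow> 'k::field) \<Rightarrow> (path \<Rightarrow> path) \<Rightarrow> path \<Rightarrow> path \<Rightarrow> 'k" where
  "Kw wt sh p r = wt p * (if r = sh p \<and> r \<in> G then 1 else 0)"

lemma Kw_G: "r \<notin> G \<Longrightarrow> Kw wt sh p r = 0" by (simp add: Kw_def)

lemma sumK1: "(\<Sum>p\<in>G. Kw wt sh u p * X p) = wt u * (if sh u \<in> G then X (sh u) else 0)"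
proof -
  have "(\<Sum>p\<in>G. Kw wt sh u p * X p) = (\<Sum>p\<in>G. if sh u = p then wt u * X p else 0)"
    by (intro sum.cong) (auto simp: Kw_def)
  then show ?thesis by simp
qed

lemma ws_identity:
  fixes wt :: "path \<Rightarrow> 'k::field" and phi :: "nat \<Rightarrow> nat"
  assumes shP: "\<And>a k g. sh (P a k g) = P a (phi k) g"
    and w1: "wt (Triv 1) = 0" and w3: "wt (Triv 3) = 0"
    and wadd: "\<And>a k k' g'. wt (P a (k + k') g') = wt (P a k False) + wt (P False k' g')"
    and phL: "\<And>a k k'. wt (P a k False) \<noteq> 0 \<Longrightarrow> phi (k + k') = phi k + k'"
    and phR: "\<And>k k' g'. wt (P False k' g') \<noteq> 0 \<Longrightarrow> phi (k + k') = k + phi k'"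
    and bad: "\<And>a K g. \<not> goodP a K g \<Longrightarrow> goodP a (phi K) g \<Longrightarrow> wt (P a K g) = 0"
    and u: "u \<in> G" and v: "v \<in> G" and r: "r \<in> G"
  shows "(\<Sum>w\<in>G. tm u v w * Kw wt sh w r) = (\<Sum>p\<in>G. Kw wt sh u p * tm p v r) + (\<Sum>q\<in>G. Kw wt sh v q * tm u q r)"
proof -
  have w1': "wt (Triv (Suc 0)) = 0" using w1 by simp
  have main: "(case pmul u v of None \<Rightarrow> 0 | Some w \<Rightarrow> if w \<in> G then Kw wt sh w r else 0)
     = wt u * (if sh u \<in> G then tm (sh u) v r else 0) + wt v * (if sh v \<in> G then tm u (sh v) r else 0)"
  proof -
    from u show ?thesis
    proof (cases rule: G_cases)
      case T1
      from v show ?thesis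
        by (cases rule: G_cases) (use T1 in \<open>auto simp: tm_def Kw_def shP w1 w1' w3\<close>)
    next
      case T3
      from v show ?thesis
        by (cases rule: G_cases) (use T3 in \<open>auto simp: tm_def Kw_def shP w1 w1' w3\<close>)
    next
      case (PP a k g)
      note U = this
      from v show ?thesis
      proof (cases rule: G_cases)
        case T1 then show ?thesis using U by (auto simp: tm_def Kw_def shP w1 w1' w3)
      next
        case T3 then show ?thesis using U by (auto simp: tm_def Kw_def shP w1 w1' w3)
      next
        case (PP a' k' g')
        note V = this
        show ?thesis
        proof (cases "\<not> g \<and> \<not> a'")
          case False
          then show ?thesis by (auto simp: U V tm_def shP)
        next
          case True
          let ?w = "P a (k + k') g'"
          let ?I = "(if r = P a (phi (k + k')) g' \<and> r \<in> G then 1 else 0) :: 'k"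
          have L: "(case pmul u v of None \<Rightarrow> 0 | Some w \<Rightarrow> if w \<in> G then Kw wt sh w r else 0)
              = (if goodP a (k + k') g' then wt ?w * ?I else 0)"
            using True by (simp add: U V Kw_def shP)
          have T1': "wt u * (if sh u \<in> G then tm (sh u) v r else 0) = wt u * ?I"
          proof (cases "wt u = 0")
            case False
            then have ph: "phi (k + k') = phi k + k'" using phL[of a k k'] True U by simp
            show ?thesis
              using True ph by (auto simp: U V tm_def shP dest: goodP_L)
          qed simp
          have T2': "wt v * (if sh v \<in> G then tm u (sh v) r else 0) = wt v * ?I"
          proof (cases "wt v = 0")
            case False
            then have ph: "phi (k + k') = k + phi k'" using phR[of k' g' k] True V by simp
            show ?thesis
              using True ph by (auto simp: U V tm_def shP dest: goodP_R)
          qed simp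
          have W: "wt ?w = wt u + wt v" using wadd[of a k k' g'] True U V by simp
          have "wt ?w * ?I = (if goodP a (k + k') g' then wt ?w * ?I else 0)"
          proof (cases "goodP a (k + k') g'")
            case False
            have "wt ?w * ?I = 0"
            proof (cases "r = P a (phi (k + k')) g'")
              case True
              then have "goodP a (phi (k + k')) g'" using r by simp
              then have "wt ?w = 0" using bad False by blast
              then show ?thesis by simp
            qed simp
            then show ?thesis using False by simp
          qed simp
          then show ?thesis unfolding L T1' T2' W by (simp add: distrib_right)
        qed
      qed
    qed
  qed
  show ?thesis unfolding sum_tmL sumK1 using main by simp
qed

definition KB :: "nat \<Rightarrow> path \<Rightarrow> path \<Rightarrow> 'k::field" where
  "KB s = Kw (\<lambda>p. of_nat (pk p)) (\<lambda>p. P (pa p) (pk p + s) (pg p))"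
definition KA :: "nat \<Rightarrow> path \<Rightarrow> path \<Rightarrow> 'k::field" where
  "KA j = Kw (\<lambda>p. if pa p then 1 else 0) (\<lambda>p. P (pa p) (pk p + j) (pg p))"
definition KC :: "path \<Rightarrow> path \<Rightarrow> 'k::field" where
  "KC = Kw (\<lambda>p. of_nat (pk p)) (\<lambda>p. P (pa p) (pk p - 1) (pg p))"

lemma goodP_mono: "goodP a (K + s) g \<Longrightarrow> goodP a K g" by (auto simp: goodP_def)

lemma fder_KB: "fder (lin (KB s))"
  unfolding KB_def
proof (rule lin_fder[OF Kw_G])
  fix u v r assume uvr: "u \<in> G" "v \<in> G" "r \<in> G"
  show "(\<Sum>w\<in>G. tm u v w * Kw (\<lambda>p. of_nat (pk p)) (\<lambda>p. P (pa p) (pk p + s) (pg p)) w r) =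
    (\<Sum>p\<in>G. Kw (\<lambda>p. of_nat (pk p)) (\<lambda>p. P (pa p) (pk p + s) (pg p)) u p * tm p v r) +
    (\<Sum>q\<in>G. Kw (\<lambda>p. of_nat (pk p)) (\<lambda>p. P (pa p) (pk p + s) (pg p)) v q * tm u q r)"
    by (rule ws_identity[where phi = "\<lambda>k. k + s", OF _ _ _ _ _ _ _ uvr]) (auto dest: goodP_mono)
qed

lemma fder_KA: "fder (lin (KA j))"
  unfolding KA_def
proof (rule lin_fder[OF Kw_G])
  fix u v r assume uvr: "u \<in> G" "v \<in> G" "r \<in> G"
  show "(\<Sum>w\<in>G. tm u v w * Kw (\<lambda>p. if pa p then 1 else 0) (\<lambda>p. P (pa p) (pk p + j) (pg p)) w r) =
    (\<Sum>p\<in>G. Kw (\<lambda>p. if pa p then 1 else 0) (\<lambda>p. P (pa p) (pk p + j) (pg p)) u p * tm p v r) +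
    (\<Sum>q\<in>G. Kw (\<lambda>p. if pa p then 1 else 0) (\<lambda>p. P (pa p) (pk p + j) (pg p)) v q * tm u q r)"
    by (rule ws_identity[where phi = "\<lambda>k. k + j", OF _ _ _ _ _ _ _ uvr]) (auto dest: goodP_mono)
qed

lemma ofnat_dvd0: "of_nat (gcd n (gcd n' n'')) = (0::'k::field) \<Longrightarrow> gcd n (gcd n' n'') dvd x \<Longrightarrow> of_nat x = (0::'k)"
  by (metis dvdE mult_zero_left of_nat_mult)

lemma thresh:
  assumes c: "of_nat (gcd n (gcd n' n'')) = (0::'k::field)"
    and ng: "\<not> goodP a K g" and g: "goodP a (K - 1) g"
  shows "of_nat K = (0::'k)"
proof -
  have K1: "K \<ge> 1" using ng g by (cases K) auto
  have "K = n \<or> (a \<and> K = n') \<or> (g \<and> K = n'') \<or> (a \<and> g \<and> K = t)"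
    using ng g K1 unfolding goodP_def by auto
  moreover have "gcd n (gcd n' n'') dvd n" "gcd n (gcd n' n'') dvd n'" "gcd n (gcd n' n'') dvd n''"
    by (auto intro: dvd_trans)
  moreover have "gcd n (gcd n' n'') dvd t"
  proof -
    have "gcd n (gcd n' n'') dvd m" by (auto simp: m_def min_def intro: dvd_trans)
    then show ?thesis using gd by (simp add: t_def dvd_diff_nat)
  qed
  ultimately show ?thesis using ofnat_dvd0[OF c] by blast
qed

lemma ofnat_pos: "of_nat k \<noteq> (0::'a::semiring_1) \<Longrightarrow> 0 < k" by (cases k) auto

lemma fder_KC:
  assumes c: "of_nat (gcd n (gcd n' n'')) = (0::'k::field)"
  shows "fder (lin (KC :: path \<Rightarrow> path \<Rightarrow> 'k))"
  unfolding KC_def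
proof (rule lin_fder[OF Kw_G])
  fix u v r assume uvr: "u \<in> G" "v \<in> G" "r \<in> G"
  show "(\<Sum>w\<in>G. tm u v w * Kw (\<lambda>p. of_nat (pk p)) (\<lambda>p. P (pa p) (pk p - 1) (pg p)) w r) =
    (\<Sum>p\<in>G. Kw (\<lambda>p. of_nat (pk p) :: 'k) (\<lambda>p. P (pa p) (pk p - 1) (pg p)) u p * tm p v r) +
    (\<Sum>q\<in>G. Kw (\<lambda>p. of_nat (pk p)) (\<lambda>p. P (pa p) (pk p - 1) (pg p)) v q * tm u q r)"
  proof (rule ws_identity[where phi = "\<lambda>k. k - 1", OF _ _ _ _ _ _ _ uvr])
    fix a K g assume "\<not> goodP a K g" "goodP a (K - 1) g"
    then show "of_nat (pk (P a K g)) = (0::'k)" using thresh[OF c] by simp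
  qed (auto dest: ofnat_pos)
qed

end



context HH begin

lemma phiF_cong: "(\<And>q. q \<in> G \<Longrightarrow> d1 (bp q) = d2 (bp q)) \<Longrightarrow> phiF d1 = phiF d2"
proof -
  assume h: "\<And>q. q \<in> G \<Longrightarrow> d1 (bp q) = d2 (bp q)"
  have "d1 (bp (P False 1 False)) = d2 (bp (P False 1 False))" "d1 (bp (P True 0 False)) = d2 (bp (P True 0 False))"
    "d1 (bp (P False 0 True)) = d2 (bp (P False 0 True))" by (simp_all add: h)
  then show ?thesis unfolding phiF_def by (simp only:)
qed

lemma phi_ad: "phiF (ad x) i = 0"
proof -
  have A: "ad x (bp (P False 1 False)) (P False (Suc i) False) = 0" if "i < n - 1"
    using that adB_loop[of "Suc i" x] by (simp add: goodP_def)
  have B: "ad x (bp (P True 0 False)) (P True (Suc (i - (n - 1))) False) + ad x (bp (P False 0 True)) (P False (Suc (i - (n - 1))) True) = 0"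
    if "\<not> i < n - 1" "i < n - 1 + (m - 1)"
  proof -
    have k: "Suc (i - (n - 1)) < m" using that by auto
    then have "P True (Suc (i - (n - 1))) False \<in> G" "P False (Suc (i - (n - 1))) True \<in> G"
      using n'n n''n by (auto simp: goodP_def m_def)
    then show ?thesis using adAC[of "Suc (i - (n - 1))" x] by simp
  qed
  have C: "ad x (bp (P False 1 False)) (P False 0 False) = 0"
    using adB_loop[of 0 x] n2 by (simp add: goodP_def)
  show ?thesis unfolding phiF_def using A B C by simp
qed

lemma lin_bB: "lin K (bp (P False 1 False)) r = K (P False 1 False) r" by (rule lin_bp) simp
lemma lin_bA: "lin K (bp (P True 0 False)) r = K (P True 0 False) r" by (rule lin_bp) simp
lemma lin_bC: "lin K (bp (P False 0 True)) r = K (P False 0 True) r" by (rule lin_bp) simp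

lemma phi_KB: "s < n - 1 \<Longrightarrow> phiF (lin (KB s) :: (path \<Rightarrow> 'k::field) \<Rightarrow> _) i = (if i = s then 1 else 0)"
proof -
  assume s: "s < n - 1"
  show ?thesis
  proof (cases "i < n - 1")
    case True
    then have "P False (Suc i) False \<in> G" by (simp add: goodP_def)
    then show ?thesis using True unfolding phiF_def lin_bB by (simp add: KB_def Kw_def)
  next
    case False
    then show ?thesis using s unfolding phiF_def lin_bB lin_bA lin_bC by (auto simp: KB_def Kw_def)
  qed
qed

lemma phi_KA: "1 \<le> j \<Longrightarrow> j < m \<Longrightarrow> phiF (lin (KA j) :: (path \<Rightarrow> 'k::field) \<Rightarrow> _) i = (if i = n - 1 + (j - 1) then 1 else 0)"
proof -
  assume j: "1 \<le> j" "j < m"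
  have Gj: "P True j False \<in> G" using j n'n by (simp add: goodP_def m_def)
  show ?thesis
  proof (cases "\<not> i < n - 1 \<and> i < n - 1 + (m - 1)")
    case True
    have "(Suc (i - (n - 1)) = j) = (i = n - 1 + (j - 1))" using True j by auto
    then show ?thesis using True Gj unfolding phiF_def lin_bB lin_bA lin_bC by (auto simp: KA_def Kw_def)
  next
    case False
    then show ?thesis using j unfolding phiF_def lin_bB lin_bA lin_bC by (auto simp: KA_def Kw_def)
  qed
qed

lemma phi_KC: "of_nat (gcd n (gcd n' n'')) = (0::'k::field) \<Longrightarrow>
   phiF (lin KC :: (path \<Rightarrow> 'k) \<Rightarrow> _) i = (if i = n - 1 + (m - 1) then 1 else 0)"
proof -
  assume c: "of_nat (gcd n (gcd n' n'')) = (0::'k::field)"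
  have G0: "P False 0 False \<in> G" using n2 by (simp add: goodP_def)
  show ?thesis using c G0 unfolding phiF_def lin_bB lin_bA lin_bC by (auto simp: KC_def Kw_def)
qed

lemma cm_sumL: "cm (\<lambda>r. \<Sum>j<(L::nat). c j * F j r) g = (\<lambda>r. \<Sum>j<L. c j * cm (F j) g r)"
proof (induction L)
  case 0
  then show ?case by (simp add: zero_fun_def[symmetric])
next
  case (Suc L)
  have e: "(\<lambda>r. \<Sum>j<Suc L. c j * F j r) = (\<lambda>r. \<Sum>j<L. c j * F j r) + sm (c L) (F L)"
    by (simp add: fun_eq_iff sm_def)
  show ?case unfolding e cm_addL cm_smL Suc.IH by (simp add: fun_eq_iff sm_def)
qed

lemma cm_sumR: "cm f (\<lambda>r. \<Sum>j<(L::nat). c j * F j r) = (\<lambda>r. \<Sum>j<L. c j * cm f (F j) r)"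
proof (induction L)
  case 0
  then show ?case by (simp add: zero_fun_def[symmetric])
next
  case (Suc L)
  have e: "(\<lambda>r. \<Sum>j<Suc L. c j * F j r) = (\<lambda>r. \<Sum>j<L. c j * F j r) + sm (c L) (F L)"
    by (simp add: fun_eq_iff sm_def)
  show ?case unfolding e cm_addR cm_smR Suc.IH by (simp add: fun_eq_iff sm_def)
qed

lemma fder_comb:
  fixes ds :: "nat \<Rightarrow> (path \<Rightarrow> 'k::field) \<Rightarrow> path \<Rightarrow> 'k"
  assumes ds: "\<And>j. j < L \<Longrightarrow> fder (ds j)"
  shows "fder (\<lambda>f r. \<Sum>j<L. c j * ds j f r)"
  unfolding fder_def
proof (intro conjI allI impI)
  fix f :: "path \<Rightarrow> 'k" assume f: "supG f"
  show "supG (\<lambda>r. \<Sum>j<L. c j * ds j f r)"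
    using fder_supG[OF ds f] by (simp add: supG_def)
next
  fix f g :: "path \<Rightarrow> 'k" assume f: "supG f" and g: "supG g"
  show "(\<lambda>r. \<Sum>j<L. c j * ds j (f + g) r) = (\<lambda>r. \<Sum>j<L. c j * ds j f r) + (\<lambda>r. \<Sum>j<L. c j * ds j g r)"
    using fder_add[OF ds f g] by (simp add: fun_eq_iff distrib_left sum.distrib)
next
  fix cc and f :: "path \<Rightarrow> 'k" assume f: "supG f"
  show "(\<lambda>r. \<Sum>j<L. c j * ds j (sm cc f) r) = sm cc (\<lambda>r. \<Sum>j<L. c j * ds j f r)"
    using fder_sm[OF ds f] by (simp add: fun_eq_iff sm_def sum_distrib_left mult_ac)
next
  fix f g :: "path \<Rightarrow> 'k" assume f: "supG f" and g: "supG g"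
  show "(\<lambda>r. \<Sum>j<L. c j * ds j (cm f g) r) = cm (\<lambda>r. \<Sum>j<L. c j * ds j f r) g + cm f (\<lambda>r. \<Sum>j<L. c j * ds j g r)"
    using fder_leib[OF ds f g] by (simp add: cm_sumL cm_sumR fun_eq_iff distrib_left sum.distrib)
qed

lemma sum_if_c: "(\<Sum>j<(L::nat). c j * (if Q then A j else B j)) = (if Q then (\<Sum>j<L. c j * A j) else (\<Sum>j<L. c j * B j))"
  by simp

lemma phiF_comb: "phiF (\<lambda>f r. \<Sum>j<(L::nat). c j * ds j f r) i = (\<Sum>j<L. c j * phiF (ds j) i)"
  unfolding phiF_def sum_if_c by (simp only: distrib_left sum.distrib mult_zero_right sum.neutral_const)

end



lemma lin_dep:
  fixes v :: "nat \<Rightarrow> nat \<Rightarrow> 'k::field"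
  shows "finite J \<Longrightarrow> card J > N \<Longrightarrow> (\<forall>j\<in>J. \<forall>i\<ge>N. v j i = 0) \<Longrightarrow>
    \<exists>c. (\<exists>j\<in>J. c j \<noteq> 0) \<and> (\<forall>i. (\<Sum>j\<in>J. c j * v j i) = 0)"
proof (induction N arbitrary: J v)
  case 0
  then obtain j where "j \<in> J" by fastforce
  moreover have "\<forall>i. (\<Sum>j\<in>J. 1 * v j i) = 0" using 0 by simp
  ultimately show ?case by (intro exI[of _ "\<lambda>_. 1"]) auto
next
  case (Suc N)
  show ?case
  proof (cases "\<forall>j\<in>J. v j N = 0")
    case True
    have "\<forall>j\<in>J. \<forall>i\<ge>N. v j i = 0"
    proof (intro ballI allI impI)
      fix j i assume "j \<in> J" "N \<le> i"
      then show "v j i = 0" using True Suc.prems(3) by (cases "i = N") auto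
    qed
    then show ?thesis using Suc.IH[of J v] Suc.prems by auto
  next
    case False
    then obtain k where k: "k \<in> J" "v k N \<noteq> 0" by blast
    define J' where "J' = J - {k}"
    define w where "w = (\<lambda>j i. v j i - (v j N / v k N) * v k i)"
    have fin: "finite J'" using Suc.prems by (simp add: J'_def)
    have card: "card J' > N" using Suc.prems k by (simp add: J'_def)
    have wz: "\<forall>j\<in>J'. \<forall>i\<ge>N. w j i = 0"
    proof (intro ballI allI impI)
      fix j i assume j: "j \<in> J'" and i: "N \<le> i"
      show "w j i = 0"
      proof (cases "i = N")
        case True
        then show ?thesis using k by (simp add: w_def)
      next
        case False
        then have "Suc N \<le> i" using i by simp
        then show ?thesis using Suc.prems(3) j k by (simp add: w_def J'_def)
      qed
    qed
    obtain c' where c': "\<exists>j\<in>J'. c' j \<noteq> 0" "\<forall>i. (\<Sum>j\<in>J'. c' j * w j i) = 0"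
      using Suc.IH[OF fin card wz] by blast
    define S where "S = (\<Sum>j\<in>J'. c' j * v j N)"
    define c where "c = c'(k := - S / v k N)"
    have "\<forall>i. (\<Sum>j\<in>J. c j * v j i) = 0"
    proof
      fix i
      have split: "(\<Sum>j\<in>J. c j * v j i) = c k * v k i + (\<Sum>j\<in>J'. c' j * v j i)"
      proof -
        have "(\<Sum>j\<in>J. c j * v j i) = c k * v k i + (\<Sum>j\<in>J'. c j * v j i)"
          using k Suc.prems(1) by (simp add: J'_def sum.remove)
        also have "(\<Sum>j\<in>J'. c j * v j i) = (\<Sum>j\<in>J'. c' j * v j i)"
          by (intro sum.cong) (auto simp: c_def J'_def)
        finally show ?thesis .
      qed
      have t1: "\<And>j. c' j * w j i = c' j * v j i - (c' j * v j N / v k N) * v k i"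
        by (simp add: w_def algebra_simps)
      have t2: "(\<Sum>j\<in>J'. (c' j * v j N / v k N) * v k i) = (S / v k N) * v k i"
        by (simp add: S_def sum_distrib_right[symmetric] sum_divide_distrib[symmetric])
      have "0 = (\<Sum>j\<in>J'. c' j * w j i)" using c' by simp
      also have "\<dots> = (\<Sum>j\<in>J'. c' j * v j i) - (S / v k N) * v k i"
        by (simp only: t1 sum_subtractf t2)
      finally have "(\<Sum>j\<in>J'. c' j * v j i) = (S / v k N) * v k i" by simp
      then show "(\<Sum>j\<in>J. c j * v j i) = 0" unfolding split by (simp add: c_def)
    qed
    moreover have "\<exists>j\<in>J. c j \<noteq> 0"
      using c'(1) by (auto simp: c_def J'_def)
    ultimately show ?thesis by blast
  qed
qed

context HH begin

definition dF :: "((path \<Rightarrow> 'k::field) set \<Rightarrow> (path \<Rightarrow> 'k) set) \<Rightarrow> (path \<Rightarrow> 'k) \<Rightarrow> path \<Rightarrow> 'k" where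
  "dF D f = vec (D (emb f))"
definition LD :: "((path \<Rightarrow> 'k::field) \<Rightarrow> path \<Rightarrow> 'k) \<Rightarrow> (path \<Rightarrow> 'k) set \<Rightarrow> (path \<Rightarrow> 'k) set" where
  "LD dd A = emb (dd (vec A))"

lemma Lam_LL: "Lam II = LL" by (simp add: LL_def)

lemma emb_add: "supG f \<Longrightarrow> supG g \<Longrightarrow> emb (f + g) = qadd II (emb f) (emb g)"
  by (simp add: qadd_eq emb_LL)
lemma emb_sm: "supG f \<Longrightarrow> emb (sm c f) = qsmul II c (emb f)"
  by (simp add: qsmul_eq emb_LL)
lemma emb_cm: "supG f \<Longrightarrow> supG g \<Longrightarrow> emb (cm f g) = qmul II (emb f) (emb g)"
  by (simp add: qmul_eq emb_LL)

lemma der_LL: "is_derivation II D \<Longrightarrow> A \<in> LL \<Longrightarrow> D A \<in> LL"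
  by (simp add: is_derivation_def Lam_LL)

lemma der_fder:
  fixes D :: "(path \<Rightarrow> 'k::field) set \<Rightarrow> (path \<Rightarrow> 'k) set"
  assumes D: "is_derivation II D"
  shows "fder (dF D)"
  unfolding fder_def
proof (intro conjI allI impI)
  have DL: "\<And>A. A \<in> LL \<Longrightarrow> D A \<in> LL" using der_LL[OF D] .
  have Dadd: "\<And>A B. A \<in> LL \<Longrightarrow> B \<in> LL \<Longrightarrow> D (qadd II A B) = qadd II (D A) (D B)"
    using D by (simp add: is_derivation_def Lam_LL)
  have Dsm: "\<And>A c. A \<in> LL \<Longrightarrow> D (qsmul II c A) = qsmul II c (D A)"
    using D by (simp add: is_derivation_def Lam_LL)
  have Dmul: "\<And>A B. A \<in> LL \<Longrightarrow> B \<in> LL \<Longrightarrow> D (qmul II A B) = qadd II (qmul II (D A) B) (qmul II A (D B))"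
    using D by (simp add: is_derivation_def Lam_LL)
  fix f g :: "path \<Rightarrow> 'k" and c :: 'k
  show "supG (dF D f)" by (simp add: dF_def)
  show "supG f \<Longrightarrow> supG g \<Longrightarrow> dF D (f + g) = dF D f + dF D g"
    by (simp add: dF_def emb_add Dadd emb_LL DL vec_qadd)
  show "supG f \<Longrightarrow> dF D (sm c f) = sm c (dF D f)"
    by (simp add: dF_def emb_sm Dsm emb_LL DL vec_qsmul)
  show "supG f \<Longrightarrow> supG g \<Longrightarrow> dF D (cm f g) = cm (dF D f) g + cm f (dF D g)"
    by (simp add: dF_def emb_cm Dmul emb_LL DL vec_qadd vec_qmul qmul_LL)
qed

lemma LD_der:
  fixes dd :: "(path \<Rightarrow> 'k::field) \<Rightarrow> path \<Rightarrow> 'k"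
  assumes dd: "fder dd"
  shows "is_derivation II (LD dd)"
  unfolding is_derivation_def Lam_LL
proof (intro conjI ballI allI)
  fix A B :: "(path \<Rightarrow> 'k) set" assume A: "A \<in> LL" and B: "B \<in> LL"
  show "LD dd A \<in> LL" by (simp add: LD_def emb_LL fder_supG[OF dd])
  show "LD dd (qadd II A B) = qadd II (LD dd A) (LD dd B)"
    using A B by (simp add: LD_def vec_qadd qadd_eq emb_LL fder_supG[OF dd] fder_add[OF dd])
  show "LD dd (qmul II A B) = qadd II (qmul II (LD dd A) B) (qmul II A (LD dd B))"
    using A B by (simp add: LD_def vec_qmul qmul_eq qadd_eq emb_LL fder_supG[OF dd] fder_leib[OF dd] qmul_LL)
next
  fix c :: 'k and A :: "(path \<Rightarrow> 'k) set" assume A: "A \<in> LL"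
  show "LD dd (qsmul II c A) = qsmul II c (LD dd A)"
    using A by (simp add: LD_def vec_qsmul qsmul_eq emb_LL fder_supG[OF dd] fder_sm[OF dd])
qed

lemma dF_LD: "supG f \<Longrightarrow> fder dd \<Longrightarrow> dF (LD dd) f = dd f"
  by (simp add: dF_def LD_def fder_supG)

lemma qcomb_vec:
  "(\<forall>D\<in>set Ds. \<forall>A\<in>LL. D A \<in> LL) \<Longrightarrow> length cs = length Ds \<Longrightarrow> A \<in> LL \<Longrightarrow>
   qcomb II (zip cs Ds) A \<in> LL \<and> vec (qcomb II (zip cs Ds) A) = (\<lambda>r. \<Sum>j<length Ds. cs ! j * vec ((Ds ! j) A) r)"
proof (induction Ds arbitrary: cs)
  case Nil
  then show ?case by (simp add: qzero_LL vec_qzero zero_fun_def)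
next
  case (Cons D Ds)
  then obtain c cs' where cs: "cs = c # cs'" "length cs' = length Ds" by (cases cs) auto
  have IH: "qcomb II (zip cs' Ds) A \<in> LL \<and> vec (qcomb II (zip cs' Ds) A) = (\<lambda>r. \<Sum>j<length Ds. cs' ! j * vec ((Ds ! j) A) r)"
    using Cons cs by simp
  have DA: "D A \<in> LL" using Cons.prems by simp
  have "qcomb II (zip cs (D # Ds)) A = qadd II (qsmul II c (D A)) (qcomb II (zip cs' Ds) A)"
    using cs by simp
  moreover have "qadd II (qsmul II c (D A)) (qcomb II (zip cs' Ds) A) \<in> LL"
    using IH DA by (simp add: qadd_LL qsmul_LL)
  moreover have "vec (qadd II (qsmul II c (D A)) (qcomb II (zip cs' Ds) A)) = (\<lambda>r. \<Sum>j<length (D # Ds). cs ! j * vec (((D # Ds) ! j) A) r)"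
    using IH DA cs by (simp add: vec_qadd qsmul_LL vec_qsmul sm_def fun_eq_iff sum.lessThan_Suc_shift del: sum.lessThan_Suc)
  ultimately show ?case by simp
qed

lemma dF_qcomb:
  assumes Ds: "\<forall>D\<in>set Ds. is_derivation II D" and cs: "length cs = length Ds" and f: "supG f"
  shows "dF (qcomb II (zip cs Ds)) f = (\<lambda>r. \<Sum>j<length Ds. cs ! j * dF (Ds ! j) f r)"
proof -
  have "\<forall>D\<in>set Ds. \<forall>A\<in>LL. D A \<in> LL" using Ds der_LL by blast
  then show ?thesis using qcomb_vec[OF _ cs emb_LL[OF f]] by (simp add: dF_def)
qed

lemma qcomb_LL:
  assumes Ds: "\<forall>D\<in>set Ds. is_derivation II D" and cs: "length cs = length Ds" and A: "A \<in> LL"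
  shows "qcomb II (zip cs Ds) A \<in> LL"
proof -
  have "\<forall>D\<in>set Ds. \<forall>A\<in>LL. D A \<in> LL" using Ds der_LL by blast
  then show ?thesis using qcomb_vec[OF _ cs A] by simp
qed

lemma inner_dF: "is_inner II Q \<Longrightarrow> \<exists>x. \<forall>f. supG f \<longrightarrow> dF Q f = ad x f"
proof -
  assume "is_inner II Q"
  then obtain X where X: "X \<in> LL" "\<forall>A\<in>LL. Q A = inner_der II X A" by (auto simp: is_inner_def Lam_LL)
  have "\<forall>f. supG f \<longrightarrow> dF Q f = ad (vec X) f"
    using X by (simp add: dF_def emb_LL vec_inner)
  then show ?thesis by blast
qed

lemma inner_of:
  fixes Q :: "(path \<Rightarrow> 'k::field) set \<Rightarrow> (path \<Rightarrow> 'k) set"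
  assumes QL: "\<forall>A\<in>LL. Q A \<in> LL" and x: "supG x" and h: "\<forall>f. supG f \<longrightarrow> dF Q f = ad x f"
  shows "is_inner II Q"
  unfolding is_inner_def Lam_LL
proof (intro bexI ballI)
  show "emb x \<in> LL" using x by (rule emb_LL)
  fix A :: "(path \<Rightarrow> 'k) set" assume A: "A \<in> LL"
  show "Q A = inner_der II (emb x) A"
  proof (rule LL_eqI)
    show "Q A \<in> LL" using QL A by blast
    show "inner_der II (emb x) A \<in> LL" using A x by (simp add: inner_LL emb_LL)
    have "vec (Q A) = dF Q (vec A)" using A by (simp add: dF_def emb_vec)
    also have "\<dots> = ad x (vec A)" using h by simp
    also have "\<dots> = vec (inner_der II (emb x) A)" using A x by (simp add: vec_inner emb_LL)
    finally show "vec (Q A) = vec (inner_der II (emb x) A)" .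
  qed
qed

definition NN :: "'k::field itself \<Rightarrow> nat" where
  "NN _ = n - 1 + (m - 1) + (if of_nat (gcd n (gcd n' n'')) = (0::'k) then 1 else 0)"

lemma phiF_big: "NN TYPE('k::field) \<le> i \<Longrightarrow> phiF (dd :: (path \<Rightarrow> 'k) \<Rightarrow> path \<Rightarrow> 'k) i = 0"
  unfolding phiF_def NN_def by (auto split: if_splits)

lemma upper:
  assumes ind: "indep_mod_inner (II :: (path \<Rightarrow> 'k::field) set) Ds"
  shows "length Ds \<le> NN TYPE('k)"
proof (rule ccontr)
  assume "\<not> length Ds \<le> NN TYPE('k)"
  then have big: "card {..<length Ds} > NN TYPE('k)" by simp
  have Dd: "\<forall>D\<in>set Ds. is_derivation II D" using ind by (simp add: indep_mod_inner_def)
  let ?v = "\<lambda>j i. phiF (dF (Ds ! j)) i"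
  have vz: "\<forall>j\<in>{..<length Ds}. \<forall>i\<ge>NN TYPE('k). ?v j i = 0" using phiF_big by blast
  obtain c where c: "\<exists>j\<in>{..<length Ds}. c j \<noteq> (0::'k)" "\<forall>i. (\<Sum>j\<in>{..<length Ds}. c j * ?v j i) = 0"
    using lin_dep[OF _ big vz] by blast
  define cs where "cs = map c [0..<length Ds]"
  have lcs: "length cs = length Ds" by (simp add: cs_def)
  define Q where "Q = qcomb II (zip cs Ds)"
  define dQ where "dQ = (\<lambda>f r. \<Sum>j<length Ds. c j * dF (Ds ! j) f r)"
  have dFQ: "dF Q f = dQ f" if "supG f" for f
    unfolding Q_def dF_qcomb[OF Dd lcs that] dQ_def by (simp add: cs_def fun_eq_iff)
  have fQ: "fder dQ" unfolding dQ_def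
    by (rule fder_comb) (use Dd in \<open>auto intro: der_fder\<close>)
  have pQ: "phiF dQ i = 0" for i
    using c(2) unfolding dQ_def phiF_comb by simp
  obtain x where x: "supG x" "\<forall>f. supG f \<longrightarrow> dQ f = ad x f" using upper_core[OF fQ pQ] by blast
  have "is_inner II Q"
  proof (rule inner_of)
    show "\<forall>A\<in>LL. Q A \<in> LL" unfolding Q_def using qcomb_LL[OF Dd lcs] by blast
    show "supG x" by (rule x(1))
    show "\<forall>f. supG f \<longrightarrow> dF Q f = ad x f" using x(2) dFQ by simp
  qed
  then have "\<forall>a\<in>set cs. a = 0" using ind lcs by (simp add: indep_mod_inner_def Q_def)
  then show False using c(1) by (auto simp: cs_def)
qed

definition FDs :: "'k::field itself \<Rightarrow> ((path \<Rightarrow> 'k) \<Rightarrow> path \<Rightarrow> 'k) list" where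
  "FDs _ = map (\<lambda>s. lin (KB s)) [0..<n - 1] @ map (\<lambda>j. lin (KA (Suc j))) [0..<m - 1]
     @ (if of_nat (gcd n (gcd n' n'')) = (0::'k) then [lin KC] else [])"

lemma FDs_len: "length (FDs TYPE('k::field)) = NN TYPE('k)"
  by (simp add: FDs_def NN_def)

lemma FDs_fder: "d' \<in> set (FDs TYPE('k::field)) \<Longrightarrow> fder d'"
  by (auto simp: FDs_def fder_KB fder_KA fder_KC split: if_splits)

lemma FDs_phi: "j < NN TYPE('k::field) \<Longrightarrow> phiF (FDs TYPE('k) ! j) i = (if i = j then 1 else 0)"
proof -
  assume j: "j < NN TYPE('k)"
  have j': "j < n - 1 + (m - 1) \<or> (j = n - 1 + (m - 1) \<and> of_nat (gcd n (gcd n' n'')) = (0::'k))"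
    using j by (cases "of_nat (gcd n (gcd n' n'')) = (0::'k)") (auto simp: NN_def)
  consider (a) "j < n - 1" | (b) "n - 1 \<le> j" "j < n - 1 + (m - 1)" | (c) "j = n - 1 + (m - 1)" "of_nat (gcd n (gcd n' n'')) = (0::'k)"
    using j' by (cases "j < n - 1") auto
  then show ?thesis
  proof cases
    case a
    then show ?thesis by (simp add: FDs_def nth_append phi_KB)
  next
    case b
    have jj: "j - (n - 1) < m - 1" "\<not> j < n - 1" using b by auto
    have e: "FDs TYPE('k) ! j = lin (KA (Suc (j - (n - 1))))" using jj by (simp add: FDs_def nth_append)
    have "Suc (j - (n - 1)) < m" using b by auto
    then show ?thesis unfolding e using b by (subst phi_KA) auto
  next
    case c
    have e: "FDs TYPE('k) ! j = lin KC" using c by (simp add: FDs_def nth_append)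
    show ?thesis unfolding e using c by (simp add: phi_KC)
  qed
qed

lemma lower:
  "indep_mod_inner (II :: (path \<Rightarrow> 'k::field) set) (map LD (FDs TYPE('k)))"
  unfolding indep_mod_inner_def
proof (intro conjI allI impI ballI)
  fix D assume "D \<in> set (map LD (FDs TYPE('k)))"
  then show "is_derivation II D" using FDs_fder LD_der by auto
next
  fix cs :: "'k list" and a
  assume lcs: "length cs = length (map LD (FDs TYPE('k)))" and inn: "is_inner II (qcomb II (zip cs (map LD (FDs TYPE('k)))))"
    and a: "a \<in> set cs"
  let ?Ds = "map LD (FDs TYPE('k))"
  have L: "length ?Ds = NN TYPE('k)" by (simp add: FDs_len)
  have Dd: "\<forall>D\<in>set ?Ds. is_derivation II D" using FDs_fder LD_der by auto
  obtain x where x: "\<forall>f. supG f \<longrightarrow> dF (qcomb II (zip cs ?Ds)) f = ad x f" using inner_dF[OF inn] by blast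
  have "cs ! i = 0" if i: "i < NN TYPE('k)" for i
  proof -
    let ?dQ = "\<lambda>f r. \<Sum>j<NN TYPE('k). cs ! j * dF (?Ds ! j) f r"
    have "phiF (ad x) i = phiF ?dQ i"
    proof (rule arg_cong[where f = "\<lambda>h. h i"], rule phiF_cong)
      fix q :: path assume q: "q \<in> G"
      show "ad x (bp q) = ?dQ (bp q)"
        using x[rule_format, of "bp q"] dF_qcomb[OF Dd lcs, of "bp q"] q L by simp
    qed
    also have "\<dots> = (\<Sum>j<NN TYPE('k). cs ! j * phiF (dF (?Ds ! j)) i)" by (rule phiF_comb)
    also have "\<dots> = (\<Sum>j<NN TYPE('k). cs ! j * (if i = j then 1 else 0))"
    proof (rule sum.cong[OF refl])
      fix j assume j: "j \<in> {..<NN TYPE('k)}"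
      have "FDs TYPE('k) ! j \<in> set (FDs TYPE('k))" using j by (simp add: FDs_len[where 'k='k])
      then have fd: "fder (FDs TYPE('k) ! j)" by (rule FDs_fder)
      have "phiF (dF (?Ds ! j)) = phiF (FDs TYPE('k) ! j)"
        by (rule phiF_cong) (use j FDs_len[where 'k='k] fd in \<open>simp add: dF_LD\<close>)
      then show "cs ! j * phiF (dF (?Ds ! j)) i = cs ! j * (if i = j then 1 else 0)"
        using j FDs_phi[where 'k='k] by simp
    qed
    also have "\<dots> = cs ! i" using i by (simp add: if_distrib cong: if_cong)
    finally have "phiF (ad x) i = cs ! i" .
    moreover have "phiF (ad x) i = 0" by (rule phi_ad)
    ultimately show ?thesis by simp
  qed
  then show "a = 0" using a lcs L by (auto simp: in_set_conv_nth)
qed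

theorem HH_main:
  "HH1_finite_dim (II :: (path \<Rightarrow> 'k::field) set) \<and> HH1_dim (II :: (path \<Rightarrow> 'k) set) = NN TYPE('k)"
proof -
  let ?S = "{length Ds | Ds. indep_mod_inner (II :: (path \<Rightarrow> 'k) set) Ds}"
  have ub: "\<forall>x\<in>?S. x \<le> NN TYPE('k)" using upper by blast
  have mem: "NN TYPE('k) \<in> ?S" using lower FDs_len by (metis (mono_tags, lifting) length_map mem_Collect_eq)
  have "bdd_above ?S" using ub by (auto simp: bdd_above_def)
  moreover have "Sup ?S = NN TYPE('k)" using mem ub by (intro cSup_eq_maximum) auto
  ultimately show ?thesis by (simp add: HH1_finite_dim_def HH1_dim_def)
qed

end


theorem mainTheorem8:
  fixes n n' n'' d :: nat and V :: "'k::field poly set"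
  assumes "2 \<le> n" and "1 \<le> n'" and "n' \<le> n" and "1 \<le> n''" and "n'' \<le> n"
    and "d \<le> min n' n''"
    and "V = {v. [:0, 1:] ^ (min n' n'' - d) dvd v}"
    and "gcd n (gcd n' n'') dvd d"
  shows "HH1_finite_dim (Iq n n' n'' V)
    \<and> HH1_dim (Iq n n' n'' V)
        = (n - 1) + (min n' n'' - 1) + (if of_nat (gcd n (gcd n' n'')) = (0::'k) then 1 else 0)
    \<and> HH1_dim (Iq n n' n'' V) > 0
    \<and> (min n' n'' = 1 \<longrightarrow> HH1_dim (Iq n n' n'' V) = n - 1)"
proof -
  interpret HH n n' n'' d
    using assms(1-6,8) by unfold_locales
  have V: "V = Vt" using assms(7) by (simp add: Vt_def t_def m_def)
  have I: "Iq n n' n'' V = II" by (simp add: II_def V)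
  have main: "HH1_finite_dim (II :: (path \<Rightarrow> 'k) set) \<and> HH1_dim (II :: (path \<Rightarrow> 'k) set) = NN TYPE('k)"
    by (rule HH_main)
  have NNe: "NN TYPE('k) = (n - 1) + (min n' n'' - 1) + (if of_nat (gcd n (gcd n' n'')) = (0::'k) then 1 else 0)"
    by (simp add: NN_def m_def)
  have pos: "NN TYPE('k) > 0" using assms(1) NNe by simp
  have m1: "min n' n'' = 1 \<longrightarrow> NN TYPE('k) = n - 1"
  proof
    assume mn: "min n' n'' = 1"
    then have "gcd n' n'' = 1" by (auto simp: min_def split: if_splits)
    then have "gcd n (gcd n' n'') = 1" by simp
    then show "NN TYPE('k) = n - 1" using NNe mn by simp
  qed
  show ?thesis unfolding I using main NNe pos m1 by simp
qed

end
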